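(* Let $A(z)=|z|^2I_d-z\otimes z$ on $\mathbb{R}^d$. Let $u^*_t$ be a solution of the Landau equation with Maxwellian molecules, $$\frac{\partial u^*_t}{\partial t}+\nabla\cdot(v^*_tu^*_t)=0,\qquad v^*_t(x)=-\int_{\mathbb{R}^d}A(x-y)\big[\nabla\log u^*_t(x)-\nabla\log u^*_t(y)\big]u^*_t(y)\,\mathrm{d}y,$$ and let $u_t$ satisfy the continuity equation $\frac{\partial u_t}{\partial t}+\nabla\cdot(v_tu_t)=0$ with $v_t(x)=b(x)-D_t(x)s_t(x)$, where $s_t$ is a sufficiently regular vector field, $b(x)=-(d-1)(x-V)$, and $$D_{i,j}(t,x)=\delta_{i,j}\big(|x|^2+2E-2V\cdot x\big)+V_ix_j+V_jx_i-x_ix_j-\Sigma_{i,j}(t),$$ $$\Sigma_{i,j}(t)=\Sigma_{i,j}(\infty)-\big(\Sigma_{i,j}(\infty)-\Sigma_{i,j}(0)\big)e^{-4dt},\quad\Sigma_{i,j}(0)=\int x_ix_ju^*_0\,\mathrm{d}x,\quad\Sigma_{i,j}(\infty)=\tfrac1d\big(\delta_{i,j}(2E-|V|^2)+dV_iV_j\big),$$ with $V=\int xu^*_0\,\mathrm{d}x$, $2E=\int|x|^2u^*_0\,\mathrm{d}x$ (so that $b=A*\nabla u^*_t$ and $D_t=A*u^*_t$). Assume the initial first and second moments match: $\int xu_0\,\mathrm{d}x=\int xu^*_0\,\mathrm{d}x$ and $\int x_ix_ju_0\,\mathrm{d}x=\int x_ix_ju^*_0\,\mathrm{d}x$ for all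 $i,j$. Then $$\frac{\mathrm{d}}{\mathrm{d}t}\mathrm{KL}(u_t\|u^*_t)\le\frac12\int_{\mathbb{R}^d}|s_t-\nabla\log u_t|^2_{D_t}\,u_t\,\mathrm{d}x.$$
   Context: $\mathrm{KL}(u_1\|u_2)=\int\log\frac{u_1}{u_2}\,\mathrm{d}u_1$ if $u_1\ll u_2$ and $+\infty$ otherwise. For a positive semi-definite matrix $M$, $|w|^2_M=w^TMw$. Convolution of a matrix kernel with a density is entrywise. *)

theory Defs
  imports "HOL-Probability.Probability"
begin

definition grad :: "(real^'d \<Rightarrow> real) \<Rightarrow> real^'d \<Rightarrow> real^'d" where
  "grad f x = (\<chi> i. frechet_derivative f (at x) (axis i 1))"

definition divg :: "(real^'d \<Rightarrow> real^'d) \<Rightarrow> real^'d \<Rightarrow> real" where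
  "divg F x = (\<Sum>i\<in>UNIV. frechet_derivative F (at x) (axis i 1) $ i)"

definition landauA :: "real^'d \<Rightarrow> real^'d^'d" where
  "landauA z = (\<chi> i j. (if i = j then (norm z)^2 else 0) - z $ i * z $ j)"

definition wnorm2 :: "real^'d^'d \<Rightarrow> real^'d \<Rightarrow> real" where
  "wnorm2 M w = w \<bullet> (M *v w)"

text \<open>KL(u1 || u2) for the measures with Lebesgue densities u1, u2, via the library notion
  (natural logarithm). KL_divergence b M N is KL(N || M).\<close>
definition KLdens :: "(real^'d \<Rightarrow> real) \<Rightarrow> (real^'d \<Rightarrow> real) \<Rightarrow> real" where
  "KLdens u1 u2 = KL_divergence (exp 1) (density lborel (\<lambda>x. ennreal (u2 x)))
                                       (density lborel (\<lambda>x. ennreal (u1 x)))"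

definition meanV :: "(real^'d \<Rightarrow> real) \<Rightarrow> real^'d" where
  "meanV f = integral\<^sup>L lborel (\<lambda>x. f x *\<^sub>R x)"

definition twoE :: "(real^'d \<Rightarrow> real) \<Rightarrow> real" where
  "twoE f = integral\<^sup>L lborel (\<lambda>x. (norm x)^2 * f x)"

definition Sigma0 :: "(real^'d \<Rightarrow> real) \<Rightarrow> 'd \<Rightarrow> 'd \<Rightarrow> real" where
  "Sigma0 f i j = integral\<^sup>L lborel (\<lambda>x. x $ i * x $ j * f x)"

definition SigmaInf :: "(real^'d \<Rightarrow> real) \<Rightarrow> 'd \<Rightarrow> 'd \<Rightarrow> real" where
  "SigmaInf f i j = (1 / real CARD('d)) *
     ((if i = j then twoE f - (norm (meanV f))^2 else 0)
      + real CARD('d) * meanV f $ i * meanV f $ j)"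

definition Sigma :: "(real^'d \<Rightarrow> real) \<Rightarrow> real \<Rightarrow> 'd \<Rightarrow> 'd \<Rightarrow> real" where
  "Sigma f t i j = SigmaInf f i j
     - (SigmaInf f i j - Sigma0 f i j) * exp (- 4 * real CARD('d) * t)"

text \<open>D_t(x), with u*_0 = f\<close>
definition Dmat :: "(real^'d \<Rightarrow> real) \<Rightarrow> real \<Rightarrow> real^'d \<Rightarrow> real^'d^'d" where
  "Dmat f t x = (\<chi> i j. (if i = j then (norm x)^2 + twoE f - 2 * (meanV f \<bullet> x) else 0)
        + meanV f $ i * x $ j + meanV f $ j * x $ i - x $ i * x $ j - Sigma f t i j)"

definition bfield :: "(real^'d \<Rightarrow> real) \<Rightarrow> real^'d \<Rightarrow> real^'d" where
  "bfield f x = - ((real CARD('d) - 1) *\<^sub>R (x - meanV f))"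

definition landau_vel :: "(real \<Rightarrow> real^'d \<Rightarrow> real) \<Rightarrow> real \<Rightarrow> real^'d \<Rightarrow> real^'d" where
  "landau_vel us t x = - integral\<^sup>L lborel (\<lambda>y. us t y *\<^sub>R
      (landauA (x - y) *v (grad (\<lambda>z. ln (us t z)) x - grad (\<lambda>z. ln (us t z)) y)))"

definition gauss_bounded :: "(real \<Rightarrow> real^'d \<Rightarrow> real) \<Rightarrow> bool" where
  "gauss_bounded g \<longleftrightarrow> (\<forall>T\<ge>0. \<exists>C c. c > 0 \<and>
     (\<forall>t\<in>{0..T}. \<forall>x. \<bar>g t x\<bar> \<le> C * exp (- c * (norm x)^2)))"

definition poly_bounded :: "(real \<Rightarrow> real^'d \<Rightarrow> real) \<Rightarrow> bool" where
  "poly_bounded g \<longleftrightarrow> (\<forall>T\<ge>0. \<exists>C (k::nat).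
     (\<forall>t\<in>{0..T}. \<forall>x. \<bar>g t x\<bar> \<le> C * (1 + norm x) ^ k))"

end

theory Submission
  imports Defs
begin

lemma gauss1_integrable:
  fixes c :: real assumes c: "c > 0"
  shows "integrable lborel (\<lambda>x::real. exp (- c * x\<^sup>2))"
proof -
  define \<sigma> where "\<sigma> = sqrt (1 / (2 * c))"
  have s2: "\<sigma>\<^sup>2 = 1 / (2*c)" using c by (simp add: \<sigma>_def)
  have pos: "sqrt (2 * pi * \<sigma>\<^sup>2) > 0" using c s2 by simp
  have e: "- (x - 0)\<^sup>2 / (2 * \<sigma>\<^sup>2) = - c * x\<^sup>2" for x
    using c by (simp add: s2 field_simps)
  have "\<sigma> > 0" using c by (simp add: \<sigma>_def)
  have "\<sigma> \<noteq> 0" using s2 c by auto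
  have nd: "normal_density 0 \<sigma> x = 1 / sqrt (2 * pi * \<sigma>\<^sup>2) * exp (- c * x\<^sup>2)" for x
    unfolding normal_density_def e by (rule refl)
  have E: "(\<lambda>x. sqrt (2 * pi * \<sigma>\<^sup>2) * normal_density 0 \<sigma> x) = (\<lambda>x::real. exp (- c * x\<^sup>2))"
    using pos \<open>\<sigma> \<noteq> 0\<close> by (intro ext) (simp add: nd)
  have "integrable lborel (\<lambda>x. sqrt (2 * pi * \<sigma>\<^sup>2) * normal_density 0 \<sigma> x)"
    using \<open>\<sigma> > 0\<close> by (intro integrable_mult_right integrable_normal_density) auto
  then show ?thesis unfolding E .
qed

lemma gauss_integrable:
  fixes c :: real assumes c: "c > 0"
  shows "integrable lborel (\<lambda>x::'a::euclidean_space. exp (- c * (norm x)\<^sup>2))"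
proof -
  have eq: "exp (- c * (norm x)\<^sup>2) = (\<Prod>b\<in>Basis. exp (- c * (x \<bullet> b)\<^sup>2))" for x :: 'a
  proof -
    have "(norm x)\<^sup>2 = (\<Sum>b\<in>Basis. (x \<bullet> b)\<^sup>2)"
      unfolding power2_norm_eq_inner by (subst euclidean_inner) (simp add: power2_eq_square)
    then show ?thesis by (simp add: sum_distrib_left exp_sum[symmetric])
  qed
  have fin: "(\<integral>\<^sup>+y. ennreal (exp (- c * y\<^sup>2)) \<partial>lborel) < \<infinity>"
    using gauss1_integrable[OF c] by (simp add: integrable_iff_bounded)
  have "(\<integral>\<^sup>+x. ennreal (norm (exp (- c * (norm x)\<^sup>2))) \<partial>(lborel::'a measure))
       = (\<integral>\<^sup>+x. (\<Prod>b\<in>Basis. ennreal (exp (- c * ((x::'a) \<bullet> b)\<^sup>2))) \<partial>lborel)"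
  proof (intro nn_integral_cong)
    fix x :: 'a
    have "norm (exp (- c * (norm x)\<^sup>2)) = exp (- c * (norm x)\<^sup>2)" by simp
    also have "\<dots> = (\<Prod>b\<in>Basis. exp (- c * (x \<bullet> b)\<^sup>2))" by (rule eq)
    finally show "ennreal (norm (exp (- c * (norm x)\<^sup>2))) = (\<Prod>b\<in>Basis. ennreal (exp (- c * (x \<bullet> b)\<^sup>2)))"
      by (metis prod_ennreal exp_ge_zero)
  qed
  also have "\<dots> = (\<integral>\<^sup>+y. ennreal (exp (- c * y\<^sup>2)) \<partial>lborel) ^ DIM('a)"
    by (subst nn_integral_lborel_prod[where f="\<lambda>b y. ennreal (exp (- c * y\<^sup>2))"]) auto
  also have "\<dots> < \<infinity>" using fin by (simp add: power_less_top_ennreal)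
  finally show ?thesis by (simp add: integrable_iff_bounded)
qed

definition gbu :: "'s set \<Rightarrow> ('s \<Rightarrow> 'a::real_normed_vector \<Rightarrow> real) \<Rightarrow> bool" where
  "gbu S f \<longleftrightarrow> (\<exists>C c. c > 0 \<and> (\<forall>\<tau>\<in>S. \<forall>x. \<bar>f \<tau> x\<bar> \<le> C * exp (- c * (norm x)\<^sup>2)))"

definition pbu :: "'s set \<Rightarrow> ('s \<Rightarrow> 'a::real_normed_vector \<Rightarrow> real) \<Rightarrow> bool" where
  "pbu S f \<longleftrightarrow> (\<exists>C k. \<forall>\<tau>\<in>S. \<forall>x. \<bar>f \<tau> x\<bar> \<le> C * (1 + norm x) ^ k)"

lemma poly_gauss:
  fixes r c :: real assumes c: "c > 0" and r: "r \<ge> 0"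
  shows "(1 + r) ^ k * exp (- c * r\<^sup>2) \<le> exp ((real k)\<^sup>2 / (2 * c)) * exp (- (c/2) * r\<^sup>2)"
proof -
  have "(1 + r) ^ k \<le> exp r ^ k"
    using r by (intro power_mono) (auto simp: exp_ge_add_one_self)
  also have "\<dots> = exp (real k * r)" by (simp add: exp_of_nat_mult)
  finally have 1: "(1 + r) ^ k * exp (- c * r\<^sup>2) \<le> exp (real k * r) * exp (- c * r\<^sup>2)"
    by (intro mult_right_mono) auto
  have q: "real k * r - c * r\<^sup>2 \<le> (real k)\<^sup>2 / (2 * c) - (c/2) * r\<^sup>2"
  proof -
    have "0 \<le> (c/2) * (r - real k / c)\<^sup>2" using c by simp
    also have "(c/2) * (r - real k / c)\<^sup>2 = (c/2) * r\<^sup>2 - real k * r + (real k)\<^sup>2 / (2 * c)"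
      using c by (simp add: power2_eq_square field_simps)
    finally show ?thesis by simp
  qed
  have "exp (real k * r) * exp (- c * r\<^sup>2) = exp (real k * r - c * r\<^sup>2)" by (simp add: exp_add[symmetric])
  also have "\<dots> \<le> exp ((real k)\<^sup>2 / (2 * c) - (c/2) * r\<^sup>2)" using q by simp
  also have "\<dots> = exp ((real k)\<^sup>2 / (2 * c)) * exp (- (c/2) * r\<^sup>2)" by (simp add: exp_add[symmetric])
  finally show ?thesis using 1 by linarith
qed

lemma gauss_shift:
  fixes x h :: "'a::real_normed_vector" and c :: real assumes c: "c > 0"
  shows "exp (- c * (norm (x + h))\<^sup>2) \<le> exp (c * (norm h)\<^sup>2) * exp (- (c/2) * (norm x)\<^sup>2)"
proof -
  have "norm x \<le> norm (x + h) + norm h" by (metis add_diff_cancel norm_triangle_ineq4)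
  then have "(norm x)\<^sup>2 \<le> (norm (x + h) + norm h)\<^sup>2" by (simp add: power_mono)
  also have "\<dots> \<le> 2 * (norm (x+h))\<^sup>2 + 2 * (norm h)\<^sup>2"
  proof -
    have "0 \<le> (norm (x+h) - norm h)\<^sup>2" by simp
    then show ?thesis unfolding power2_diff power2_sum by linarith
  qed
  finally have n2: "(norm x)\<^sup>2 \<le> 2 * (norm (x+h))\<^sup>2 + 2 * (norm h)\<^sup>2" .
  have "(c/2) * (norm x)\<^sup>2 \<le> (c/2) * (2 * (norm (x+h))\<^sup>2 + 2 * (norm h)\<^sup>2)"
    using c n2 by (intro mult_left_mono) auto
  then have "- c * (norm (x + h))\<^sup>2 \<le> c * (norm h)\<^sup>2 + - (c/2) * (norm x)\<^sup>2"
    by (simp add: algebra_simps)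
  then have "exp (- c * (norm (x + h))\<^sup>2) \<le> exp (c * (norm h)\<^sup>2 + - (c/2) * (norm x)\<^sup>2)"
    by (subst exp_le_cancel_iff)
  then show ?thesis by (simp only: exp_add)
qed

lemma pbu_le: assumes "pbu S g" "\<And>\<tau> x. \<tau> \<in> S \<Longrightarrow> \<bar>f \<tau> x\<bar> \<le> \<bar>g \<tau> x\<bar>" shows "pbu S f"
proof -
  obtain C k where h: "\<forall>\<tau>\<in>S. \<forall>x. \<bar>g \<tau> x\<bar> \<le> C * (1 + norm x) ^ k" using assms(1) unfolding pbu_def by blast
  have "\<forall>\<tau>\<in>S. \<forall>x. \<bar>f \<tau> x\<bar> \<le> C * (1 + norm x) ^ k" using h assms(2) by (blast intro: order_trans)
  then show ?thesis unfolding pbu_def by blast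
qed

lemma gbu_le: assumes "gbu S g" "\<And>\<tau> x. \<tau> \<in> S \<Longrightarrow> \<bar>f \<tau> x\<bar> \<le> \<bar>g \<tau> x\<bar>" shows "gbu S f"
proof -
  obtain C c where c: "c > 0" and h: "\<forall>\<tau>\<in>S. \<forall>x. \<bar>g \<tau> x\<bar> \<le> C * exp (- c * (norm x)\<^sup>2)" using assms(1) unfolding gbu_def by blast
  have "\<forall>\<tau>\<in>S. \<forall>x. \<bar>f \<tau> x\<bar> \<le> C * exp (- c * (norm x)\<^sup>2)" using h assms(2) by (blast intro: order_trans)
  then show ?thesis using c unfolding gbu_def by blast
qed

lemma pbu_bounded: "(\<And>\<tau> x. \<tau> \<in> S \<Longrightarrow> \<bar>f \<tau> x\<bar> \<le> B) \<Longrightarrow> pbu S f"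
  unfolding pbu_def by (rule exI[of _ B], rule exI[of _ 0]) auto

lemma pbu_const[simp]: "pbu S (\<lambda>\<tau> x. c)"
  by (rule pbu_bounded[of _ _ "\<bar>c\<bar>"]) auto

lemma pbu_norm: "pbu S (\<lambda>\<tau> x. norm x)"
  unfolding pbu_def by (rule exI[of _ 1], rule exI[of _ 1]) auto

lemma pbu_cnorm: "pbu S (\<lambda>\<tau> x. norm x) \<Longrightarrow> pbu S f \<Longrightarrow> True" by simp

lemma pbu_pos_C: 
  assumes "pbu S f" obtains C k where "C \<ge> 0" "\<And>\<tau> x. \<tau> \<in> S \<Longrightarrow> \<bar>f \<tau> x\<bar> \<le> C * (1 + norm x) ^ k"
proof -
  from assms obtain C k where h: "\<forall>\<tau>\<in>S. \<forall>x. \<bar>f \<tau> x\<bar> \<le> C * (1 + norm x) ^ k" unfolding pbu_def by blast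
  have "\<bar>f \<tau> x\<bar> \<le> \<bar>C\<bar> * (1 + norm x) ^ k" if "\<tau> \<in> S" for \<tau> x
    by (rule order_trans[OF h[rule_format, OF that]]) (intro mult_right_mono; simp)
  then show ?thesis using that[of "\<bar>C\<bar>" k] by auto
qed

lemma pbu_add:
  assumes "pbu S f" "pbu S g" shows "pbu S (\<lambda>\<tau> x. f \<tau> x + g \<tau> x)"
proof -
  obtain C1 k1 where C1: "C1 \<ge> 0" "\<And>\<tau> x. \<tau> \<in> S \<Longrightarrow> \<bar>f \<tau> x\<bar> \<le> C1 * (1 + norm x) ^ k1"
    using assms(1) by (rule pbu_pos_C) blast
  obtain C2 k2 where C2: "C2 \<ge> 0" "\<And>\<tau> x. \<tau> \<in> S \<Longrightarrow> \<bar>g \<tau> x\<bar> \<le> C2 * (1 + norm x) ^ k2"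
    using assms(2) by (rule pbu_pos_C) blast
  have "\<bar>f \<tau> x + g \<tau> x\<bar> \<le> (C1 + C2) * (1 + norm x) ^ (k1 + k2)" if "\<tau> \<in> S" for \<tau> x
  proof -
    have a: "(1 + norm x) ^ k1 \<le> (1 + norm x) ^ (k1 + k2)" by (intro power_increasing) auto
    have b: "(1 + norm x) ^ k2 \<le> (1 + norm x) ^ (k1 + k2)" by (intro power_increasing) auto
    have "\<bar>f \<tau> x + g \<tau> x\<bar> \<le> C1 * (1 + norm x) ^ k1 + C2 * (1 + norm x) ^ k2"
      using C1(2)[OF that, of x] C2(2)[OF that, of x] by linarith
    also have "\<dots> \<le> C1 * (1 + norm x) ^ (k1 + k2) + C2 * (1 + norm x) ^ (k1 + k2)"
      using a b C1(1) C2(1) by (intro add_mono mult_left_mono) auto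
    finally show ?thesis by (simp add: algebra_simps)
  qed
  then show ?thesis unfolding pbu_def by blast
qed

lemma pbu_mult:
  assumes "pbu S f" "pbu S g" shows "pbu S (\<lambda>\<tau> x. f \<tau> x * g \<tau> x)"
proof -
  obtain C1 k1 where C1: "C1 \<ge> 0" "\<And>\<tau> x. \<tau> \<in> S \<Longrightarrow> \<bar>f \<tau> x\<bar> \<le> C1 * (1 + norm x) ^ k1"
    using assms(1) by (rule pbu_pos_C) blast
  obtain C2 k2 where C2: "C2 \<ge> 0" "\<And>\<tau> x. \<tau> \<in> S \<Longrightarrow> \<bar>g \<tau> x\<bar> \<le> C2 * (1 + norm x) ^ k2"
    using assms(2) by (rule pbu_pos_C) blast
  have "\<bar>f \<tau> x * g \<tau> x\<bar> \<le> (C1 * C2) * (1 + norm x) ^ (k1 + k2)" if "\<tau> \<in> S" for \<tau> x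
  proof -
    have "\<bar>f \<tau> x * g \<tau> x\<bar> = \<bar>f \<tau> x\<bar> * \<bar>g \<tau> x\<bar>" by (simp add: abs_mult)
    also have "\<dots> \<le> (C1 * (1 + norm x) ^ k1) * (C2 * (1 + norm x) ^ k2)"
      using C1(2)[OF that, of x] C2(2)[OF that, of x] by (intro mult_mono) auto
    finally show ?thesis by (simp add: algebra_simps power_add)
  qed
  then show ?thesis unfolding pbu_def by blast
qed

lemma pbu_uminus: "pbu S f \<Longrightarrow> pbu S (\<lambda>\<tau> x. - f \<tau> x)"
  by (erule pbu_le) auto

lemma pbu_diff: "pbu S f \<Longrightarrow> pbu S g \<Longrightarrow> pbu S (\<lambda>\<tau> x. f \<tau> x - g \<tau> x)"
  using pbu_add[OF _ pbu_uminus[of S g]] by simp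

lemma pbu_sum:
  assumes "finite A" "\<And>j. j \<in> A \<Longrightarrow> pbu S (f j)" shows "pbu S (\<lambda>\<tau> x. \<Sum>j\<in>A. f j \<tau> x)"
  using assms
proof (induction A rule: finite_induct)
  case empty then show ?case by simp
next
  case (insert a A) then show ?case by (simp add: pbu_add)
qed

lemma pbu_vec_nth: "pbu S (\<lambda>\<tau> (x::real^'n). x $ i)"
  by (rule pbu_le[OF pbu_norm]) (simp add: component_le_norm_cart)

lemma gbu_pos_C:
  assumes "gbu S f" obtains C c where "C \<ge> 0" "c > 0" "\<And>\<tau> x. \<tau> \<in> S \<Longrightarrow> \<bar>f \<tau> x\<bar> \<le> C * exp (- c * (norm x)\<^sup>2)"
proof -
  from assms obtain C c where c: "c > 0" and h: "\<forall>\<tau>\<in>S. \<forall>x. \<bar>f \<tau> x\<bar> \<le> C * exp (- c * (norm x)\<^sup>2)" unfolding gbu_def by blast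
  have "\<bar>f \<tau> x\<bar> \<le> \<bar>C\<bar> * exp (- c * (norm x)\<^sup>2)" if "\<tau> \<in> S" for \<tau> x
    by (rule order_trans[OF h[rule_format, OF that]]) (intro mult_right_mono; simp)
  then show ?thesis using that[of "\<bar>C\<bar>" c] c by auto
qed

lemma gbu_mult_pbu:
  assumes "gbu S f" "pbu S g" shows "gbu S (\<lambda>\<tau> x. f \<tau> x * g \<tau> x)"
proof -
  obtain C1 c where C1: "C1 \<ge> 0" "c > 0" "\<And>\<tau> x. \<tau> \<in> S \<Longrightarrow> \<bar>f \<tau> x\<bar> \<le> C1 * exp (- c * (norm x)\<^sup>2)"
    using assms(1) by (rule gbu_pos_C) blast
  obtain C2 k where C2: "C2 \<ge> 0" "\<And>\<tau> x. \<tau> \<in> S \<Longrightarrow> \<bar>g \<tau> x\<bar> \<le> C2 * (1 + norm x) ^ k"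
    using assms(2) by (rule pbu_pos_C) blast
  have "\<bar>f \<tau> x * g \<tau> x\<bar> \<le> (C1 * C2 * exp ((real k)\<^sup>2 / (2 * c))) * exp (- (c/2) * (norm x)\<^sup>2)" if "\<tau> \<in> S" for \<tau> x
  proof -
    have "\<bar>f \<tau> x * g \<tau> x\<bar> = \<bar>f \<tau> x\<bar> * \<bar>g \<tau> x\<bar>" by (simp add: abs_mult)
    also have "\<dots> \<le> (C1 * exp (- c * (norm x)\<^sup>2)) * (C2 * (1 + norm x) ^ k)"
      using C1(3)[OF that, of x] C2(2)[OF that, of x] C1(1) by (intro mult_mono) auto
    also have "\<dots> = (C1 * C2) * ((1 + norm x) ^ k * exp (- c * (norm x)\<^sup>2))" by (simp add: algebra_simps)
    also have "\<dots> \<le> (C1 * C2) * (exp ((real k)\<^sup>2 / (2 * c)) * exp (- (c/2) * (norm x)\<^sup>2))"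
      using C1 C2 by (intro mult_left_mono poly_gauss) auto
    finally show ?thesis by (simp add: algebra_simps)
  qed
  moreover have "c/2 > 0" using C1 by simp
  ultimately show ?thesis unfolding gbu_def by blast
qed

lemma pbu_mult_gbu: "pbu S g \<Longrightarrow> gbu S f \<Longrightarrow> gbu S (\<lambda>\<tau> x. g \<tau> x * f \<tau> x)"
  using gbu_mult_pbu[of S f g] by (simp add: mult.commute)

lemma gbu_add:
  assumes "gbu S f" "gbu S g" shows "gbu S (\<lambda>\<tau> x. f \<tau> x + g \<tau> x)"
proof -
  obtain C1 c1 where C1: "C1 \<ge> 0" "c1 > 0" "\<And>\<tau> x. \<tau> \<in> S \<Longrightarrow> \<bar>f \<tau> x\<bar> \<le> C1 * exp (- c1 * (norm x)\<^sup>2)"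
    using assms(1) by (rule gbu_pos_C) blast
  obtain C2 c2 where C2: "C2 \<ge> 0" "c2 > 0" "\<And>\<tau> x. \<tau> \<in> S \<Longrightarrow> \<bar>g \<tau> x\<bar> \<le> C2 * exp (- c2 * (norm x)\<^sup>2)"
    using assms(2) by (rule gbu_pos_C) blast
  define c where "c = min c1 c2"
  have "\<bar>f \<tau> x + g \<tau> x\<bar> \<le> (C1 + C2) * exp (- c * (norm x)\<^sup>2)" if "\<tau> \<in> S" for \<tau> x
  proof -
    have a: "exp (- c1 * (norm x)\<^sup>2) \<le> exp (- c * (norm x)\<^sup>2)"
      by (simp add: c_def mult_right_mono)
    have b: "exp (- c2 * (norm x)\<^sup>2) \<le> exp (- c * (norm x)\<^sup>2)"
      by (simp add: c_def mult_right_mono)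
    have "\<bar>f \<tau> x + g \<tau> x\<bar> \<le> C1 * exp (- c1 * (norm x)\<^sup>2) + C2 * exp (- c2 * (norm x)\<^sup>2)"
      using C1(3)[OF that, of x] C2(3)[OF that, of x] by linarith
    also have "\<dots> \<le> C1 * exp (- c * (norm x)\<^sup>2) + C2 * exp (- c * (norm x)\<^sup>2)"
      using a b C1(1) C2(1) by (intro add_mono mult_left_mono) auto
    finally show ?thesis by (simp add: algebra_simps)
  qed
  moreover have "c > 0" using C1 C2 by (simp add: c_def)
  ultimately show ?thesis unfolding gbu_def by blast
qed

lemma gbu_uminus: "gbu S f \<Longrightarrow> gbu S (\<lambda>\<tau> x. - f \<tau> x)"
  by (erule gbu_le) auto

lemma gbu_diff: "gbu S f \<Longrightarrow> gbu S g \<Longrightarrow> gbu S (\<lambda>\<tau> x. f \<tau> x - g \<tau> x)"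
  using gbu_add[OF _ gbu_uminus[of S g]] by simp

lemma gbu_sum:
  assumes "finite A" "\<And>j. j \<in> A \<Longrightarrow> gbu S (f j)" shows "gbu S (\<lambda>\<tau> x. \<Sum>j\<in>A. f j \<tau> x)"
  using assms
proof (induction A rule: finite_induct)
  case empty then show ?case unfolding gbu_def by (intro exI[of _ 0] exI[of _ 1]) auto
next
  case (insert a A) then show ?case by (simp add: gbu_add)
qed

lemma gbu_dominated:
  assumes "gbu S f"
  obtains G :: "'a::euclidean_space \<Rightarrow> real" where "integrable lborel G" "\<And>\<tau> x. \<tau> \<in> S \<Longrightarrow> \<bar>f \<tau> x\<bar> \<le> G x"
proof -
  obtain C c where C: "C \<ge> 0" "c > 0" "\<And>\<tau> x. \<tau> \<in> S \<Longrightarrow> \<bar>f \<tau> x\<bar> \<le> C * exp (- c * (norm x)\<^sup>2)"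
    using assms by (rule gbu_pos_C) blast
  have "integrable lborel (\<lambda>x::'a. C * exp (- c * (norm x)\<^sup>2))"
    using gauss_integrable[OF C(2)] by (rule integrable_mult_right)
  then show ?thesis using that C(3) by blast
qed

lemma gbu_integrable:
  assumes "gbu S f" "\<tau> \<in> S" "f \<tau> \<in> borel_measurable (lborel::'a::euclidean_space measure)"
  shows "integrable lborel (f \<tau>)"
proof -
  obtain G :: "'a \<Rightarrow> real" where G: "integrable lborel G" "\<And>\<tau> x. \<tau> \<in> S \<Longrightarrow> \<bar>f \<tau> x\<bar> \<le> G x"
    using assms(1) by (rule gbu_dominated) blast
  show ?thesis
    by (rule Bochner_Integration.integrable_bound[OF G(1) assms(3)]) (use G(2)[OF assms(2)] in \<open>auto intro: order_trans[OF _ abs_ge_self]\<close>)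
qed

lemma DUI:
  fixes f g :: "real \<Rightarrow> 'a::euclidean_space \<Rightarrow> real" and I :: "real set" and G :: "'a \<Rightarrow> real"
  assumes I: "convex I" "t \<in> I"
    and der: "\<And>\<tau> x. \<tau> \<in> I \<Longrightarrow> ((\<lambda>\<sigma>. f \<sigma> x) has_real_derivative g \<tau> x) (at \<tau> within I)"
    and fi: "\<And>\<tau>. \<tau> \<in> I \<Longrightarrow> integrable lborel (f \<tau>)"
    and gm: "g t \<in> borel_measurable lborel"
    and G: "integrable lborel G" "\<And>\<tau> x. \<tau> \<in> I \<Longrightarrow> \<bar>g \<tau> x\<bar> \<le> G x"
  shows "((\<lambda>\<sigma>. integral\<^sup>L lborel (f \<sigma>)) has_real_derivative integral\<^sup>L lborel (g t)) (at t within I)"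
  unfolding has_field_derivative_iff tendsto_at_iff_sequentially
proof (intro allI impI)
  fix X :: "nat \<Rightarrow> real" assume X: "\<forall>i. X i \<in> I - {t}" "X \<longlonglongrightarrow> t"
  define q where "q n x = (f (X n) x - f t x) / (X n - t)" for n x
  have XI: "X n \<in> I" "X n \<noteq> t" for n using X(1) by auto
  have eq: "(integral\<^sup>L lborel (f (X n)) - integral\<^sup>L lborel (f t)) / (X n - t) = integral\<^sup>L lborel (q n)" for n
    unfolding q_def using fi[OF XI(1)] fi[OF I(2)]
    by (simp add: integral_diff[symmetric])
  have qm: "q n \<in> borel_measurable lborel" for n
    unfolding q_def using fi[OF XI(1)] fi[OF I(2)] by measurable
  have lim: "(\<lambda>n. q n x) \<longlonglongrightarrow> g t x" for x
  proof -
    have "((\<lambda>y. (f y x - f t x) / (y - t)) \<longlongrightarrow> g t x) (at t within I)"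
      using der[OF I(2), of x] unfolding has_field_derivative_iff .
    then have "((\<lambda>y. (f y x - f t x) / (y - t)) \<circ> X) \<longlonglongrightarrow> g t x"
      unfolding tendsto_at_iff_sequentially using X by blast
    then show ?thesis by (simp add: q_def comp_def)
  qed
  have bnd: "norm (q n x) \<le> G x" for n x
  proof -
    have d: "((\<lambda>\<sigma>. f \<sigma> x) has_derivative (\<lambda>h. g \<tau> x * h)) (at \<tau> within I)" if "\<tau> \<in> I" for \<tau>
      using der[OF that, of x] by (simp add: has_field_derivative_def)
    have o: "onorm (\<lambda>h. g \<tau> x * h) \<le> G x" if "\<tau> \<in> I" for \<tau>
    proof -
      have "onorm (\<lambda>h. g \<tau> x * h) \<le> \<bar>g \<tau> x\<bar>" by (rule onorm_le) (simp add: abs_mult)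
      then show ?thesis using G(2)[OF that, of x] by linarith
    qed
    have "norm (f (X n) x - f t x) \<le> G x * norm (X n - t)"
      by (rule differentiable_bound[OF I(1) d o XI(1) I(2)])
    then show ?thesis using XI(2)[of n] unfolding q_def
      by (simp add: divide_le_eq abs_divide)
  qed
  have "(\<lambda>n. integral\<^sup>L lborel (q n)) \<longlonglongrightarrow> integral\<^sup>L lborel (g t)"
    by (rule integral_dominated_convergence[OF gm qm G(1)]) (use lim bnd in auto)
  then show "((\<lambda>y. (integral\<^sup>L lborel (f y) - integral\<^sup>L lborel (f t)) / (y - t)) \<circ> X) \<longlonglongrightarrow> integral\<^sup>L lborel (g t)"
    using eq by (simp add: comp_def)
qed

lemma deriv_measurable:
  fixes f :: "'a::euclidean_space \<Rightarrow> real"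
  assumes der: "\<And>x. (f has_derivative f' x) (at x)"
  shows "(\<lambda>x. f' x v) \<in> borel_measurable borel"
proof (rule borel_measurable_LIMSEQ_real)
  have cont: "continuous_on UNIV f"
    using der by (meson continuous_at_imp_continuous_on has_derivative_continuous)
  show "(\<lambda>x. (f (x + (1 / Suc n) *\<^sub>R v) - f x) / (1 / Suc n)) \<in> borel_measurable borel" for n
  proof -
    have c2: "continuous_on UNIV (\<lambda>x. f (x + c))" for c
      by (rule continuous_on_compose2[OF cont]) (auto intro: continuous_intros)
    show ?thesis using cont c2 by (intro borel_measurable_continuous_onI continuous_intros) auto
  qed
  fix x :: 'a
  have d: "((\<lambda>s. f (x + s *\<^sub>R v)) has_derivative (\<lambda>s. f' x (s *\<^sub>R v))) (at 0)"
  proof -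
    have g: "((\<lambda>s::real. x + s *\<^sub>R v) has_derivative (\<lambda>s. s *\<^sub>R v)) (at 0)"
      by (auto intro!: derivative_eq_intros)
    show ?thesis using has_derivative_compose[OF g, of f "f' x"] der[of x] by (simp add: comp_def)
  qed
  have lin: "linear (f' x)" using der[of x] has_derivative_linear by blast
  have "((\<lambda>s. f (x + s *\<^sub>R v)) has_real_derivative f' x v) (at 0)"
  proof -
    have "(\<lambda>s. f' x (s *\<^sub>R v)) = (*) (f' x v)" by (rule ext) (simp add: linear_scale[OF lin] mult.commute)
    then show ?thesis using d unfolding has_field_derivative_def by simp
  qed
  then have "((\<lambda>s. (f (x + s *\<^sub>R v) - f x) / s) \<longlongrightarrow> f' x v) (at 0)"
    unfolding has_field_derivative_iff by simp
  moreover have "(\<lambda>n. 1 / real (Suc n)) \<longlonglongrightarrow> 0" by (rule LIMSEQ_Suc[OF lim_const_over_n])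
  ultimately have "((\<lambda>s. (f (x + s *\<^sub>R v) - f x) / s) \<circ> (\<lambda>n. 1 / real (Suc n))) \<longlonglongrightarrow> f' x v"
    unfolding tendsto_at_iff_sequentially by (simp add: at_within_def[symmetric])
  then show "(\<lambda>n. (f (x + (1 / Suc n) *\<^sub>R v) - f x) / (1 / Suc n)) \<longlonglongrightarrow> f' x v"
    by (simp add: comp_def)
qed

lemma translate_integral:
  fixes h :: "'a::euclidean_space \<Rightarrow> real"
  assumes hint: "integrable lborel h"
  shows "integrable lborel (\<lambda>x. h (c + x))" "integral\<^sup>L lborel (\<lambda>x. h (c + x)) = integral\<^sup>L lborel h"
proof -
  have hm: "h \<in> borel_measurable borel" using borel_measurable_integrable[OF hint] by simp
  have m: "(+) c \<in> measurable lborel borel" by simp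
  show "integrable lborel (\<lambda>x. h (c + x))"
    using integrable_distr_eq[OF m hm] hint lborel_distr_plus[of c] by simp
  show "integral\<^sup>L lborel (\<lambda>x. h (c + x)) = integral\<^sup>L lborel h"
    using integral_distr[OF m hm] lborel_distr_plus[of c] by simp
qed

lemma integral_partial_zero:
  fixes h :: "'a::euclidean_space \<Rightarrow> real"
  assumes der: "\<And>x. (h has_derivative h' x) (at x)"
    and hint: "integrable lborel h"
    and gb: "gbu (UNIV::unit set) (\<lambda>_ x. h' x e)"
  shows "integral\<^sup>L lborel (\<lambda>x. h' x e) = 0"
proof -
  define I :: "real set" where "I = {-1..1}"
  define f where "f \<sigma> x = h (\<sigma> *\<^sub>R e + x)" for \<sigma> x
  define g where "g \<sigma> x = h' (\<sigma> *\<^sub>R e + x) e" for \<sigma> x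
  obtain C c where C: "C \<ge> 0" "c > 0" "\<And>x. \<bar>h' x e\<bar> \<le> C * exp (- c * (norm x)\<^sup>2)"
    using gb by (rule gbu_pos_C) auto
  define G where "G x = C * exp (c * (norm e)\<^sup>2) * exp (- (c/2) * (norm x)\<^sup>2)" for x :: 'a
  have Gi: "integrable lborel G"
    unfolding G_def using C(2) by (intro integrable_mult_right gauss_integrable) simp
  have Gb: "\<bar>g \<sigma> x\<bar> \<le> G x" if "\<sigma> \<in> I" for \<sigma> x
  proof -
    have "\<bar>g \<sigma> x\<bar> \<le> C * exp (- c * (norm (x + \<sigma> *\<^sub>R e))\<^sup>2)"
      using C(3)[of "\<sigma> *\<^sub>R e + x"] by (simp add: g_def add.commute)
    also have "\<dots> \<le> C * (exp (c * (norm (\<sigma> *\<^sub>R e))\<^sup>2) * exp (- (c/2) * (norm x)\<^sup>2))"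
      using C by (intro mult_left_mono gauss_shift) auto
    also have "\<dots> \<le> C * (exp (c * (norm e)\<^sup>2) * exp (- (c/2) * (norm x)\<^sup>2))"
    proof -
      have "norm (\<sigma> *\<^sub>R e) \<le> norm e" using that by (auto simp: I_def intro: mult_left_le_one_le)
      then have "(norm (\<sigma> *\<^sub>R e))\<^sup>2 \<le> (norm e)\<^sup>2" by (intro power_mono) auto
      then show ?thesis using C by (intro mult_left_mono mult_right_mono) auto
    qed
    finally show ?thesis by (simp add: G_def mult.assoc)
  qed
  have dd: "((\<lambda>\<sigma>. f \<sigma> x) has_real_derivative g \<tau> x) (at \<tau> within I)" for \<tau> x
  proof -
    have gg: "((\<lambda>s::real. s *\<^sub>R e + x) has_derivative (\<lambda>s. s *\<^sub>R e)) (at \<tau>)"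
      by (auto intro!: derivative_eq_intros)
    have lin: "linear (h' (\<tau> *\<^sub>R e + x))" using der has_derivative_linear by blast
    have "((\<lambda>s. h (s *\<^sub>R e + x)) has_derivative (\<lambda>s. h' (\<tau> *\<^sub>R e + x) (s *\<^sub>R e))) (at \<tau>)"
      using has_derivative_compose[OF gg, of h "h' (\<tau> *\<^sub>R e + x)"] der by (simp add: comp_def)
    moreover have "(\<lambda>s. h' (\<tau> *\<^sub>R e + x) (s *\<^sub>R e)) = (*) (g \<tau> x)"
      by (rule ext) (simp add: g_def linear_scale[OF lin] mult.commute)
    ultimately show ?thesis unfolding has_field_derivative_def f_def
      by (auto intro: has_derivative_at_withinI)
  qed
  have fi: "integrable lborel (f \<sigma>)" for \<sigma>
    unfolding f_def by (rule translate_integral(1)[OF hint])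
  have gm: "g 0 \<in> borel_measurable lborel"
  proof -
    have "g 0 = (\<lambda>x. h' x e)" by (rule ext) (simp add: g_def)
    then show ?thesis using deriv_measurable[OF der, of e] by simp
  qed
  have D: "((\<lambda>\<sigma>. integral\<^sup>L lborel (f \<sigma>)) has_real_derivative integral\<^sup>L lborel (g 0)) (at 0 within I)"
    by (rule DUI[OF _ _ dd fi gm Gi Gb]) (auto simp: I_def)
  have "(\<lambda>\<sigma>. integral\<^sup>L lborel (f \<sigma>)) = (\<lambda>\<sigma>. integral\<^sup>L lborel h)"
    unfolding f_def by (rule ext) (rule translate_integral(2)[OF hint])
  then have D0: "((\<lambda>\<sigma>. integral\<^sup>L lborel (f \<sigma>)) has_real_derivative 0) (at 0)"
    by (simp add: DERIV_const)
  have "at (0::real) within I = at 0"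
    by (rule at_within_interior) (simp add: I_def)
  then have "integral\<^sup>L lborel (g 0) = 0" using D D0 DERIV_unique by metis
  moreover have "g 0 = (\<lambda>x. h' x e)" by (rule ext) (simp add: g_def)
  ultimately show ?thesis by simp
qed

lemma has_derivative_vec_nth'[derivative_intros]:
  "(f has_derivative f') F \<Longrightarrow> ((\<lambda>x. f x $ i) has_derivative (\<lambda>h. f' h $ i)) F"
  by (rule bounded_linear.has_derivative[OF bounded_linear_vec_nth])

lemma has_derivative_vec_lambda:
  fixes f :: "'a::real_normed_vector \<Rightarrow> 'n::finite \<Rightarrow> real"
  assumes "\<And>i. ((\<lambda>x. f x i) has_derivative (\<lambda>h. f' h i)) F"
  shows "((\<lambda>x. \<chi> i. f x i) has_derivative (\<lambda>h. \<chi> i. f' h i)) F"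
proof -
  have "((\<lambda>x. \<Sum>i\<in>UNIV. f x i *\<^sub>R axis i 1) has_derivative (\<lambda>h. \<Sum>i\<in>UNIV. f' h i *\<^sub>R axis i (1::real))) F"
    using assms by (intro has_derivative_sum has_derivative_scaleR_left) auto
  moreover have "(\<chi> i. g i) = (\<Sum>i\<in>UNIV. g i *\<^sub>R axis i (1::real))" for g :: "'n \<Rightarrow> real"
    by (simp add: vec_eq_iff axis_def if_distrib cong: if_cong)
  ultimately show ?thesis by simp
qed

definition partial :: "(real^'d \<Rightarrow> real) \<Rightarrow> real^'d \<Rightarrow> 'd \<Rightarrow> real" where
  "partial f x i = frechet_derivative f (at x) (axis i 1)"

lemma partial_has: "(f has_derivative f') (at x) \<Longrightarrow> partial f x i = f' (axis i 1)"
  unfolding partial_def using frechet_derivative_at by metis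

lemma partial_diffD: "f differentiable (at x) \<Longrightarrow> (f has_derivative frechet_derivative f (at x)) (at x)"
  by (simp add: frechet_derivative_works)

lemma partial_add:
  assumes "f differentiable (at x)" "g differentiable (at x)"
  shows "partial (\<lambda>y. f y + g y) x i = partial f x i + partial g x i"
  using partial_has[OF has_derivative_add[OF partial_diffD[OF assms(1)] partial_diffD[OF assms(2)]], of i]
  by (simp add: partial_def)

lemma partial_mult:
  assumes "f differentiable (at x)" "g differentiable (at x)"
  shows "partial (\<lambda>y. f y * g y) x i = partial f x i * g x + f x * partial g x i"
  using partial_has[OF has_derivative_mult[OF partial_diffD[OF assms(1)] partial_diffD[OF assms(2)]], of i]
  by (simp add: partial_def)

lemma partial_const: "partial (\<lambda>y. c) x i = 0"
  by (subst partial_has[OF has_derivative_const]) simp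

lemma partial_coord: "partial (\<lambda>y::real^'d. y $ j) x i = (if i = j then 1 else 0)"
  by (subst partial_has[OF has_derivative_vec_nth'[OF has_derivative_ident]]) (simp add: axis_def)

lemma partial_sum:
  assumes "finite A" "\<And>j. j \<in> A \<Longrightarrow> f j differentiable (at x)"
  shows "partial (\<lambda>y. \<Sum>j\<in>A. f j y) x i = (\<Sum>j\<in>A. partial (f j) x i)"
proof -
  have "((\<lambda>y. \<Sum>j\<in>A. f j y) has_derivative (\<lambda>h. \<Sum>j\<in>A. frechet_derivative (f j) (at x) h)) (at x)"
    using assms by (intro has_derivative_sum partial_diffD) auto
  from partial_has[OF this, of i] show ?thesis by (simp add: partial_def)
qed

lemma grad_partial: "grad f x $ i = partial f x i"
  by (simp add: grad_def partial_def)

lemma divg_partial: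
  fixes F :: "real^'d \<Rightarrow> real^'d"
  assumes "F differentiable (at x)"
  shows "divg F x = (\<Sum>i\<in>UNIV. partial (\<lambda>y. F y $ i) x i)"
proof -
  have "partial (\<lambda>y. F y $ i) x i = frechet_derivative F (at x) (axis i 1) $ i" for i
    by (rule partial_has[OF has_derivative_vec_nth'[OF partial_diffD[OF assms]]])
  then show ?thesis by (simp add: divg_def)
qed

lemma differentiable_vec_lambda:
  fixes F :: "real^'d \<Rightarrow> real^'n"
  assumes "\<And>i. (\<lambda>y. F y $ i) differentiable (at x)"
  shows "F differentiable (at x)"
proof -
  have "((\<lambda>y. \<chi> i. F y $ i) has_derivative (\<lambda>h. \<chi> i. frechet_derivative (\<lambda>y. F y $ i) (at x) h)) (at x)"
    using assms by (intro has_derivative_vec_lambda partial_diffD)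
  then show ?thesis by (auto intro: differentiableI)
qed

definition pbs :: "real set \<Rightarrow> (real \<Rightarrow> real^'d \<Rightarrow> real) \<Rightarrow> bool" where
  "pbs S f \<longleftrightarrow> (\<forall>\<tau>\<in>S. \<forall>x. f \<tau> differentiable (at x)) \<and> pbu S f \<and> (\<forall>i. pbu S (\<lambda>\<tau> x. partial (f \<tau>) x i))"

definition gbs :: "real set \<Rightarrow> (real \<Rightarrow> real^'d \<Rightarrow> real) \<Rightarrow> bool" where
  "gbs S f \<longleftrightarrow> (\<forall>\<tau>\<in>S. \<forall>x. f \<tau> differentiable (at x)) \<and> gbu S f \<and> (\<forall>i. gbu S (\<lambda>\<tau> x. partial (f \<tau>) x i))"

lemma pbu_eq: "pbu S g \<Longrightarrow> (\<And>\<tau> x. \<tau> \<in> S \<Longrightarrow> f \<tau> x = g \<tau> x) \<Longrightarrow> pbu S f"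
  by (erule pbu_le) simp

lemma gbu_eq: "gbu S g \<Longrightarrow> (\<And>\<tau> x. \<tau> \<in> S \<Longrightarrow> f \<tau> x = g \<tau> x) \<Longrightarrow> gbu S f"
  by (erule gbu_le) simp

lemma pbs_add: assumes "pbs S f" "pbs S g" shows "pbs S (\<lambda>\<tau> x. f \<tau> x + g \<tau> x)"
proof -
  have d: "\<forall>\<tau>\<in>S. \<forall>x. f \<tau> differentiable (at x)" "\<forall>\<tau>\<in>S. \<forall>x. g \<tau> differentiable (at x)"
    using assms unfolding pbs_def by auto
  show ?thesis unfolding pbs_def
  proof (intro conjI allI ballI)
    show "(\<lambda>y. f \<tau> y + g \<tau> y) differentiable (at x)" if "\<tau> \<in> S" for \<tau> x
      using d that by (auto intro: differentiable_add)
    show "pbu S (\<lambda>\<tau> x. f \<tau> x + g \<tau> x)" using assms unfolding pbs_def by (auto intro: pbu_add)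
    show "pbu S (\<lambda>\<tau> x. partial (\<lambda>x. f \<tau> x + g \<tau> x) x i)" for i
      by (rule pbu_eq[OF pbu_add[of S "\<lambda>\<tau> x. partial (f \<tau>) x i" "\<lambda>\<tau> x. partial (g \<tau>) x i"]])
         (use assms d in \<open>auto simp: pbs_def partial_add\<close>)
  qed
qed

lemma pbs_mult: assumes "pbs S f" "pbs S g" shows "pbs S (\<lambda>\<tau> x. f \<tau> x * g \<tau> x)"
proof -
  have d: "\<forall>\<tau>\<in>S. \<forall>x. f \<tau> differentiable (at x)" "\<forall>\<tau>\<in>S. \<forall>x. g \<tau> differentiable (at x)"
    using assms unfolding pbs_def by auto
  show ?thesis unfolding pbs_def
  proof (intro conjI allI ballI)
    show "(\<lambda>y. f \<tau> y * g \<tau> y) differentiable (at x)" if "\<tau> \<in> S" for \<tau> x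
      using d that by (auto intro: differentiable_mult)
    show "pbu S (\<lambda>\<tau> x. f \<tau> x * g \<tau> x)" using assms unfolding pbs_def by (auto intro: pbu_mult)
    show "pbu S (\<lambda>\<tau> x. partial (\<lambda>x. f \<tau> x * g \<tau> x) x i)" for i
      by (rule pbu_eq[OF pbu_add[OF pbu_mult[of S "\<lambda>\<tau> x. partial (f \<tau>) x i" "g"] pbu_mult[of S f "\<lambda>\<tau> x. partial (g \<tau>) x i"]]])
         (use assms d in \<open>auto simp: pbs_def partial_mult\<close>)
  qed
qed

lemma gbs_mult: assumes "gbs S f" "pbs S g" shows "gbs S (\<lambda>\<tau> x. f \<tau> x * g \<tau> x)"
proof -
  have d: "\<forall>\<tau>\<in>S. \<forall>x. f \<tau> differentiable (at x)" "\<forall>\<tau>\<in>S. \<forall>x. g \<tau> differentiable (at x)"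
    using assms unfolding pbs_def gbs_def by auto
  show ?thesis unfolding gbs_def
  proof (intro conjI allI ballI)
    show "(\<lambda>y. f \<tau> y * g \<tau> y) differentiable (at x)" if "\<tau> \<in> S" for \<tau> x
      using d that by (auto intro: differentiable_mult)
    show "gbu S (\<lambda>\<tau> x. f \<tau> x * g \<tau> x)" using assms unfolding pbs_def gbs_def by (auto intro: gbu_mult_pbu)
    show "gbu S (\<lambda>\<tau> x. partial (\<lambda>x. f \<tau> x * g \<tau> x) x i)" for i
      by (rule gbu_eq[OF gbu_add[OF gbu_mult_pbu[of S "\<lambda>\<tau> x. partial (f \<tau>) x i" "g"] gbu_mult_pbu[of S f "\<lambda>\<tau> x. partial (g \<tau>) x i"]]])
         (use assms d in \<open>auto simp: pbs_def gbs_def partial_mult\<close>)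
  qed
qed

lemma pbs_const: assumes "\<And>\<tau>. \<tau> \<in> S \<Longrightarrow> \<bar>c \<tau>\<bar> \<le> B" shows "pbs S (\<lambda>\<tau> x. c \<tau>)"
  unfolding pbs_def using assms by (auto simp: partial_const intro: pbu_bounded)

lemma pbs_coord: "pbs S (\<lambda>\<tau> x. x $ j)"
  unfolding pbs_def
  by (auto simp: partial_coord pbu_vec_nth intro: pbu_bounded[where B=1]
      differentiableI[OF has_derivative_vec_nth'[OF has_derivative_ident]])

lemma pbs_uminus: "pbs S f \<Longrightarrow> pbs S (\<lambda>\<tau> x. - f \<tau> x)"
  using pbs_mult[OF pbs_const[of S "\<lambda>_. -1" 1]] by simp

lemma pbs_diff: "pbs S f \<Longrightarrow> pbs S g \<Longrightarrow> pbs S (\<lambda>\<tau> x. f \<tau> x - g \<tau> x)"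
  using pbs_add[OF _ pbs_uminus[of S g]] by simp

lemma pbs_sum:
  assumes "finite A" "\<And>j. j \<in> A \<Longrightarrow> pbs S (f j)" shows "pbs S (\<lambda>\<tau> x. \<Sum>j\<in>A. f j \<tau> x)"
  using assms
proof (induction A rule: finite_induct)
  case empty then show ?case using pbs_const[of S "\<lambda>_. 0" 0] by simp
next
  case (insert a A) then show ?case by (simp add: pbs_add)
qed

lemma diff_meas:
  fixes f :: "real^'d \<Rightarrow> real"
  assumes "\<And>x. f differentiable (at x)"
  shows "f \<in> borel_measurable borel" "(\<lambda>x. partial f x i) \<in> borel_measurable borel"
proof -
  have "continuous_on UNIV f"
    using assms by (meson continuous_at_imp_continuous_on differentiable_imp_continuous_within)
  then show "f \<in> borel_measurable borel" by (rule borel_measurable_continuous_onI)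
  show "(\<lambda>x. partial f x i) \<in> borel_measurable borel"
    unfolding partial_def by (rule deriv_measurable) (use assms in \<open>auto intro: partial_diffD\<close>)
qed

lemma pbs_meas: "pbs S f \<Longrightarrow> \<tau> \<in> S \<Longrightarrow> f \<tau> \<in> borel_measurable borel"
  "pbs S f \<Longrightarrow> \<tau> \<in> S \<Longrightarrow> (\<lambda>x. partial (f \<tau>) x i) \<in> borel_measurable borel"
  unfolding pbs_def by (auto intro: diff_meas)

lemma gbs_meas: "gbs S f \<Longrightarrow> \<tau> \<in> S \<Longrightarrow> f \<tau> \<in> borel_measurable borel"
  "gbs S f \<Longrightarrow> \<tau> \<in> S \<Longrightarrow> (\<lambda>x. partial (f \<tau>) x i) \<in> borel_measurable borel"
  unfolding gbs_def by (auto intro: diff_meas)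

lemma gbs_integrable: "gbs S f \<Longrightarrow> \<tau> \<in> S \<Longrightarrow> integrable lborel (f \<tau>)"
  "gbs S f \<Longrightarrow> \<tau> \<in> S \<Longrightarrow> integrable lborel (\<lambda>x. partial (f \<tau>) x i)"
proof -
  assume a: "gbs S f" "\<tau> \<in> S"
  show "integrable lborel (f \<tau>)"
    using a gbs_meas(1)[OF a] unfolding gbs_def by (auto intro: gbu_integrable)
  show "integrable lborel (\<lambda>x. partial (f \<tau>) x i)"
    using a gbs_meas(2)[OF a] unfolding gbs_def
    by (auto intro: gbu_integrable[of S "\<lambda>\<tau> x. partial (f \<tau>) x i", simplified])
qed

lemma gbs_partial_zero:
  assumes "gbs S h" "\<tau> \<in> S"
  shows "integral\<^sup>L lborel (\<lambda>x. partial (h \<tau>) x i) = 0"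
  unfolding partial_def
proof (rule integral_partial_zero)
  show "(h \<tau> has_derivative frechet_derivative (h \<tau>) (at x)) (at x)" for x
    using assms unfolding gbs_def by (auto intro: partial_diffD)
  show "integrable lborel (h \<tau>)" by (rule gbs_integrable(1)[OF assms])
  have "gbu S (\<lambda>\<tau> x. partial (h \<tau>) x i)" using assms unfolding gbs_def by auto
  then show "gbu (UNIV::unit set) (\<lambda>_ x. frechet_derivative (h \<tau>) (at x) (axis i 1))"
    using assms(2) unfolding gbu_def partial_def by blast
qed

lemma weight_partial:
  fixes w :: "real^'d \<Rightarrow> real"
  assumes pos: "\<And>y. w y > 0" and d: "(\<lambda>y. ln (w y)) differentiable (at x)"
  shows "w differentiable (at x)" "partial w x i = w x * grad (\<lambda>y. ln (w y)) x $ i"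
proof -
  have eq: "w = (\<lambda>y. exp (ln (w y)))" using pos by auto
  have "((\<lambda>y. exp (ln (w y))) has_derivative
          (\<lambda>h. exp (ln (w x)) * frechet_derivative (\<lambda>y. ln (w y)) (at x) h)) (at x)"
    using has_derivative_exp[OF partial_diffD[OF d]] by (simp add: mult.commute)
  then have h: "(w has_derivative (\<lambda>h. w x * frechet_derivative (\<lambda>y. ln (w y)) (at x) h)) (at x)"
    using pos[of x] by (subst eq) simp
  then show "w differentiable (at x)" by (rule differentiableI)
  show "partial w x i = w x * grad (\<lambda>y. ln (w y)) x $ i"
    using partial_has[OF h] by (simp add: grad_def)
qed

lemma weight_gbs:
  fixes w :: "real \<Rightarrow> real^'d \<Rightarrow> real"
  assumes pos: "\<And>\<tau> y. \<tau> \<in> S \<Longrightarrow> w \<tau> y > 0"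
    and d: "\<And>\<tau> x. \<tau> \<in> S \<Longrightarrow> (\<lambda>y. ln (w \<tau> y)) differentiable (at x)"
    and g: "gbu S w" and p: "\<And>i. pbu S (\<lambda>\<tau> x. grad (\<lambda>y. ln (w \<tau> y)) x $ i)"
  shows "gbs S w"
  unfolding gbs_def
proof (intro conjI allI ballI g)
  show "w \<tau> differentiable (at x)" if "\<tau> \<in> S" for \<tau> x
    using weight_partial(1)[OF pos d] that by blast
  show "gbu S (\<lambda>\<tau> x. partial (w \<tau>) x i)" for i
    by (rule gbu_eq[OF gbu_mult_pbu[OF g p[of i]]]) (use weight_partial(2)[OF pos d] in blast)
qed

definition pm :: "(real^'d \<Rightarrow> real) \<Rightarrow> bool" where
  "pm p \<longleftrightarrow> pbu (UNIV::unit set) (\<lambda>_ y. p y) \<and> p \<in> borel_measurable borel"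

definition gw :: "(real^'d \<Rightarrow> real) \<Rightarrow> bool" where
  "gw w \<longleftrightarrow> gbu (UNIV::unit set) (\<lambda>_ y. w y) \<and> w \<in> borel_measurable borel"

definition Lw :: "(real^'d \<Rightarrow> real) \<Rightarrow> (real^'d \<Rightarrow> real) \<Rightarrow> real" where
  "Lw w p = integral\<^sup>L lborel (\<lambda>y. w y * p y)"

lemma pm_const[simp]: "pm (\<lambda>y. c)"
  unfolding pm_def by simp

lemma pm_coord[simp]: "pm (\<lambda>y. y $ k)"
  unfolding pm_def by (simp add: pbu_vec_nth)

lemma pm_add[simp]: "pm p \<Longrightarrow> pm q \<Longrightarrow> pm (\<lambda>y. p y + q y)"
  unfolding pm_def by (auto intro: pbu_add[of UNIV "\<lambda>_. p" "\<lambda>_. q", simplified])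

lemma pm_mult[simp]: "pm p \<Longrightarrow> pm q \<Longrightarrow> pm (\<lambda>y. p y * q y)"
  unfolding pm_def by (auto intro: pbu_mult[of UNIV "\<lambda>_. p" "\<lambda>_. q", simplified])

lemma pm_uminus[simp]: "pm p \<Longrightarrow> pm (\<lambda>y. - p y)"
  using pm_mult[of "\<lambda>_. -1" p] by simp

lemma pm_diff[simp]: "pm p \<Longrightarrow> pm q \<Longrightarrow> pm (\<lambda>y. p y - q y)"
  using pm_add[of p "\<lambda>y. - q y"] by simp

lemma pm_sum[simp]: "(\<And>k. k \<in> A \<Longrightarrow> pm (f k)) \<Longrightarrow> pm (\<lambda>y. \<Sum>k\<in>A. f k y)"
proof (induction A rule: infinite_finite_induct)
  case (infinite A) then show ?case by simp
next
  case empty then show ?case by simp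
next
  case (insert a A) then show ?case by simp
qed

lemma gw_int: "gw w \<Longrightarrow> pm p \<Longrightarrow> integrable lborel (\<lambda>y. w y * p y)"
  unfolding gw_def pm_def
  by (rule gbu_integrable[of UNIV "\<lambda>_ y. w y * p y" "()", simplified])
     (auto intro: gbu_mult_pbu[of UNIV "\<lambda>_. w" "\<lambda>_. p", simplified])

lemma Lw_add[simp]: "gw w \<Longrightarrow> pm p \<Longrightarrow> pm q \<Longrightarrow> Lw w (\<lambda>y. p y + q y) = Lw w p + Lw w q"
  unfolding Lw_def using gw_int[of w p] gw_int[of w q] by (simp add: distrib_left)

lemma Lw_diff[simp]: "gw w \<Longrightarrow> pm p \<Longrightarrow> pm q \<Longrightarrow> Lw w (\<lambda>y. p y - q y) = Lw w p - Lw w q"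
  unfolding Lw_def using gw_int[of w p] gw_int[of w q] by (simp add: right_diff_distrib)

lemma Lw_uminus[simp]: "Lw w (\<lambda>y. - p y) = - Lw w p"
  unfolding Lw_def by simp

lemma Lw_cmult[simp]: "Lw w (\<lambda>y. c * p y) = c * Lw w p"
  unfolding Lw_def by (simp add: mult.left_commute)

lemma Lw_cmult_right[simp]: "Lw w (\<lambda>y. p y * c) = Lw w p * c"
  unfolding Lw_def by (simp add: mult.assoc[symmetric])

lemma Lw_sum[simp]: "gw w \<Longrightarrow> (\<And>k. k \<in> A \<Longrightarrow> pm (f k)) \<Longrightarrow> Lw w (\<lambda>y. \<Sum>k\<in>A. f k y) = (\<Sum>k\<in>A. Lw w (f k))"
  unfolding Lw_def using gw_int[of w] by (simp add: sum_distrib_left integral_sum)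

lemma Lw_zero[simp]: "Lw w (\<lambda>y. 0) = 0"
  unfolding Lw_def by simp

locale LS =
  fixes u us :: "real \<Rightarrow> real^'d \<Rightarrow> real"
    and s :: "real \<Rightarrow> real^'d \<Rightarrow> real^'d"
  assumes pos: "\<forall>\<tau>\<ge>0. \<forall>x. u \<tau> x > 0 \<and> us \<tau> x > 0"
    and mass: "integral\<^sup>L lborel (u 0) = 1" "integral\<^sup>L lborel (us 0) = 1"
    and diff: "\<forall>\<tau>\<ge>0. \<forall>x.
        (\<lambda>y. ln (u \<tau> y)) differentiable (at x) \<and>
        grad (\<lambda>y. ln (u \<tau> y)) differentiable (at x) \<and>
        (\<lambda>y. ln (us \<tau> y)) differentiable (at x) \<and>
        grad (\<lambda>y. ln (us \<tau> y)) differentiable (at x) \<and>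
        s \<tau> differentiable (at x) \<and>
        (\<lambda>y. us \<tau> y *\<^sub>R landau_vel us \<tau> y) differentiable (at x)"
    and reg_u: "gauss_bounded u" "poly_bounded (\<lambda>\<tau> x. ln (u \<tau> x))"
      "\<forall>i. poly_bounded (\<lambda>\<tau> x. grad (\<lambda>y. ln (u \<tau> y)) x $ i)"
      "\<forall>i j. poly_bounded (\<lambda>\<tau> x. jacobian (grad (\<lambda>y. ln (u \<tau> y))) (at x) $ i $ j)"
    and reg_us: "gauss_bounded us" "poly_bounded (\<lambda>\<tau> x. ln (us \<tau> x))"
      "\<forall>i. poly_bounded (\<lambda>\<tau> x. grad (\<lambda>y. ln (us \<tau> y)) x $ i)"
      "\<forall>i j. poly_bounded (\<lambda>\<tau> x. jacobian (grad (\<lambda>y. ln (us \<tau> y))) (at x) $ i $ j)"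
    and reg_s: "\<forall>i. poly_bounded (\<lambda>\<tau> x. s \<tau> x $ i)"
      "\<forall>i j. poly_bounded (\<lambda>\<tau> x. jacobian (s \<tau>) (at x) $ i $ j)"
    and landau: "\<forall>\<tau>\<ge>0. \<forall>x. ((\<lambda>\<sigma>. us \<sigma> x) has_real_derivative
        - divg (\<lambda>y. us \<tau> y *\<^sub>R landau_vel us \<tau> y) x) (at \<tau> within {0..})"
    and continuity: "\<forall>\<tau>\<ge>0. \<forall>x. ((\<lambda>\<sigma>. u \<sigma> x) has_real_derivative
        - divg (\<lambda>y. u \<tau> y *\<^sub>R (bfield (us 0) y - Dmat (us 0) \<tau> y *v s \<tau> y)) x)
        (at \<tau> within {0..})"

lemma partial_jacobian:
  fixes F :: "real^'d \<Rightarrow> real^'n"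
  assumes "F differentiable (at x)"
  shows "partial (\<lambda>y. F y $ i) x j = jacobian F (at x) $ i $ j"
  using partial_has[OF has_derivative_vec_nth'[OF partial_diffD[OF assms]]]
  by (simp add: jacobian_def matrix_def)

lemma gauss_bounded_gbu: "gauss_bounded f \<Longrightarrow> T \<ge> 0 \<Longrightarrow> gbu {0..T} f"
  unfolding gauss_bounded_def gbu_def by auto

lemma poly_bounded_pbu: "poly_bounded f \<Longrightarrow> T \<ge> 0 \<Longrightarrow> pbu {0..T} f"
  unfolding poly_bounded_def pbu_def by auto

context LS
begin

definition gu where "gu \<tau> x = grad (\<lambda>y. ln (u \<tau> y)) x"
definition gs where "gs \<tau> x = grad (\<lambda>y. ln (us \<tau> y)) x"

lemma u_pos: "\<tau> \<ge> 0 \<Longrightarrow> u \<tau> x > 0" and us_pos: "\<tau> \<ge> 0 \<Longrightarrow> us \<tau> x > 0"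
  using pos by auto

lemma gbs_u: "T \<ge> 0 \<Longrightarrow> gbs {0..T} u"
  by (rule weight_gbs) (use pos diff reg_u in \<open>auto intro: gauss_bounded_gbu poly_bounded_pbu\<close>)

lemma gbs_us: "T \<ge> 0 \<Longrightarrow> gbs {0..T} us"
  by (rule weight_gbs) (use pos diff reg_us in \<open>auto intro: gauss_bounded_gbu poly_bounded_pbu\<close>)

lemma partial_u: "\<tau> \<ge> 0 \<Longrightarrow> partial (u \<tau>) x i = u \<tau> x * gu \<tau> x $ i"
  using weight_partial(2)[of "u \<tau>" x i] pos diff by (auto simp: gu_def)

lemma partial_us: "\<tau> \<ge> 0 \<Longrightarrow> partial (us \<tau>) x i = us \<tau> x * gs \<tau> x $ i"
  using weight_partial(2)[of "us \<tau>" x i] pos diff by (auto simp: gs_def)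

lemma diff_u: "\<tau> \<ge> 0 \<Longrightarrow> u \<tau> differentiable (at x)"
  using weight_partial(1)[of "u \<tau>" x] pos diff by auto

lemma diff_us: "\<tau> \<ge> 0 \<Longrightarrow> us \<tau> differentiable (at x)"
  using weight_partial(1)[of "us \<tau>" x] pos diff by auto

lemma vec_comp_diff: "F differentiable (at x) \<Longrightarrow> (\<lambda>y. F y $ i) differentiable (at x)"
  by (rule differentiableI[OF has_derivative_vec_nth'[OF partial_diffD]])

lemma pbs_gu: "T \<ge> 0 \<Longrightarrow> pbs {0..T} (\<lambda>\<tau> x. gu \<tau> x $ i)"
  unfolding pbs_def gu_def
proof (intro conjI allI ballI)
  assume T: "T \<ge> 0"
  show "(\<lambda>x. grad (\<lambda>y. ln (u \<tau> y)) x $ i) differentiable (at x)" if "\<tau> \<in> {0..T}" for \<tau> x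
    using diff that by (auto intro: vec_comp_diff)
  show "pbu {0..T} (\<lambda>\<tau> x. grad (\<lambda>y. ln (u \<tau> y)) x $ i)"
    using reg_u T by (auto intro: poly_bounded_pbu)
  show "pbu {0..T} (\<lambda>\<tau> x. partial (\<lambda>x. grad (\<lambda>y. ln (u \<tau> y)) x $ i) x j)" for j
    by (rule pbu_eq[OF poly_bounded_pbu[OF reg_u(4)[rule_format, of i j] T]])
       (use diff in \<open>auto simp: partial_jacobian\<close>)
qed

lemma pbs_gs: "T \<ge> 0 \<Longrightarrow> pbs {0..T} (\<lambda>\<tau> x. gs \<tau> x $ i)"
  unfolding pbs_def gs_def
proof (intro conjI allI ballI)
  assume T: "T \<ge> 0"
  show "(\<lambda>x. grad (\<lambda>y. ln (us \<tau> y)) x $ i) differentiable (at x)" if "\<tau> \<in> {0..T}" for \<tau> x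
    using diff that by (auto intro: vec_comp_diff)
  show "pbu {0..T} (\<lambda>\<tau> x. grad (\<lambda>y. ln (us \<tau> y)) x $ i)"
    using reg_us T by (auto intro: poly_bounded_pbu)
  show "pbu {0..T} (\<lambda>\<tau> x. partial (\<lambda>x. grad (\<lambda>y. ln (us \<tau> y)) x $ i) x j)" for j
    by (rule pbu_eq[OF poly_bounded_pbu[OF reg_us(4)[rule_format, of i j] T]])
       (use diff in \<open>auto simp: partial_jacobian\<close>)
qed

lemma pbs_s: "T \<ge> 0 \<Longrightarrow> pbs {0..T} (\<lambda>\<tau> x. s \<tau> x $ i)"
  unfolding pbs_def
proof (intro conjI allI ballI)
  assume T: "T \<ge> 0"
  show "(\<lambda>x. s \<tau> x $ i) differentiable (at x)" if "\<tau> \<in> {0..T}" for \<tau> x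
    using diff that by (auto intro: vec_comp_diff)
  show "pbu {0..T} (\<lambda>\<tau> x. s \<tau> x $ i)"
    using reg_s T by (auto intro: poly_bounded_pbu)
  show "pbu {0..T} (\<lambda>\<tau> x. partial (\<lambda>x. s \<tau> x $ i) x j)" for j
    by (rule pbu_eq[OF poly_bounded_pbu[OF reg_s(2)[rule_format, of i j] T]])
       (use diff in \<open>auto simp: partial_jacobian\<close>)
qed

lemma pbs_lnu: "T \<ge> 0 \<Longrightarrow> pbs {0..T} (\<lambda>\<tau> x. ln (u \<tau> x))"
  unfolding pbs_def
proof (intro conjI allI ballI)
  assume T: "T \<ge> 0"
  show "(\<lambda>x. ln (u \<tau> x)) differentiable (at x)" if "\<tau> \<in> {0..T}" for \<tau> x
    using diff that by auto
  show "pbu {0..T} (\<lambda>\<tau> x. ln (u \<tau> x))"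
    using reg_u T by (auto intro: poly_bounded_pbu)
  show "pbu {0..T} (\<lambda>\<tau> x. partial (\<lambda>x. ln (u \<tau> x)) x j)" for j
    by (rule pbu_eq[OF poly_bounded_pbu[OF reg_u(3)[rule_format, of j] T]])
       (simp add: grad_partial)
qed

lemma pbs_lnus: "T \<ge> 0 \<Longrightarrow> pbs {0..T} (\<lambda>\<tau> x. ln (us \<tau> x))"
  unfolding pbs_def
proof (intro conjI allI ballI)
  assume T: "T \<ge> 0"
  show "(\<lambda>x. ln (us \<tau> x)) differentiable (at x)" if "\<tau> \<in> {0..T}" for \<tau> x
    using diff that by auto
  show "pbu {0..T} (\<lambda>\<tau> x. ln (us \<tau> x))"
    using reg_us T by (auto intro: poly_bounded_pbu)
  show "pbu {0..T} (\<lambda>\<tau> x. partial (\<lambda>x. ln (us \<tau> x)) x j)" for j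
    by (rule pbu_eq[OF poly_bounded_pbu[OF reg_us(3)[rule_format, of j] T]])
       (simp add: grad_partial)
qed

end

lemma diff_coord[simp]: "(\<lambda>y::real^'d. y $ k) differentiable (at x)"
  by (rule differentiableI[OF has_derivative_vec_nth'[OF has_derivative_ident]])

lemma diff_sum[simp]: "(\<And>k. k \<in> A \<Longrightarrow> f k differentiable F) \<Longrightarrow> (\<lambda>y. \<Sum>k\<in>A. f k y) differentiable F"
proof (induction A rule: infinite_finite_induct)
  case (insert a A) then show ?case by (simp add: differentiable_add)
qed simp_all

lemma partial_uminus:
  assumes "f differentiable (at x)" shows "partial (\<lambda>y. - f y) x i = - partial f x i"
  using partial_has[OF has_derivative_minus[OF partial_diffD[OF assms]], of i] by (simp add: partial_def)

lemma partial_diff: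
  assumes "f differentiable (at x)" "g differentiable (at x)"
  shows "partial (\<lambda>y. f y - g y) x i = partial f x i - partial g x i"
  using partial_has[OF has_derivative_diff[OF partial_diffD[OF assms(1)] partial_diffD[OF assms(2)]], of i]
  by (simp add: partial_def)

lemma partial_sum':
  assumes "\<And>j. j \<in> A \<Longrightarrow> f j differentiable (at x)"
  shows "partial (\<lambda>y. \<Sum>j\<in>A. f j y) x i = (\<Sum>j\<in>A. partial (f j) x i)"
proof (cases "finite A")
  case True then show ?thesis using partial_sum[OF True assms] by simp
next
  case False then show ?thesis by (simp add: partial_const)
qed

lemmas pd_simps = partial_add partial_diff partial_mult partial_uminus partial_const partial_coord partial_sum'
  differentiable_add differentiable_diff differentiable_mult differentiable_minus differentiable_const

lemma pbs_pm: "pbs S f \<Longrightarrow> \<tau> \<in> S \<Longrightarrow> pm (f \<tau>)"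
  unfolding pm_def using pbs_meas(1)[of S f \<tau>] unfolding pbs_def pbu_def by blast

lemma gbs_gw: "gbs S f \<Longrightarrow> \<tau> \<in> S \<Longrightarrow> gw (f \<tau>)"
  unfolding gw_def using gbs_meas(1)[of S f \<tau>] unfolding gbs_def gbu_def by blast

lemma pbs_single: "pbs S f \<Longrightarrow> \<tau> \<in> S \<Longrightarrow> pbs {\<tau>'} (\<lambda>_. f \<tau>)"
  unfolding pbs_def pbu_def by blast

lemma gbs_single: "gbs S f \<Longrightarrow> \<tau> \<in> S \<Longrightarrow> gbs {\<tau>'} (\<lambda>_. f \<tau>)"
  unfolding gbs_def gbu_def by blast

lemma pbu_family: "pbu S (\<lambda>_. f) \<Longrightarrow> \<tau> \<in> S \<Longrightarrow> pbu S' (\<lambda>_. f)"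
  unfolding pbu_def by blast

lemma weighted_ibp:
  fixes w :: "real^'d \<Rightarrow> real"
  assumes w: "gbs {0} (\<lambda>_. w)" and p: "pbs {0} (\<lambda>_. p)"
    and pw: "\<And>y. partial w y j = w y * g y"
    and gm: "pm g"
  shows "Lw w (\<lambda>y. g y * p y) = - Lw w (\<lambda>y. partial p y j)"
proof -
  have wp: "gbs {0} (\<lambda>_ y. w y * p y)" using gbs_mult[OF w p] by simp
  have dw: "w differentiable (at y)" "p differentiable (at y)" for y
    using w p unfolding gbs_def pbs_def by auto
  have "integral\<^sup>L lborel (\<lambda>y. partial (\<lambda>y. w y * p y) y j) = 0"
    using gbs_partial_zero[OF wp, of 0 j] by simp
  moreover have "partial (\<lambda>y. w y * p y) y j = w y * (g y * p y) + w y * partial p y j" for y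
    by (subst partial_mult[OF dw]) (simp add: pw algebra_simps)
  moreover have gw: "gw w" using gbs_gw[OF w] by simp
  moreover have "pm p" "pm (\<lambda>y. partial p y j)"
  proof -
    show "pm p" using pbs_pm[OF p, of 0] by simp
    have "pbu {0::real} (\<lambda>_ y. partial p y j)" using p unfolding pbs_def by blast
    then show "pm (\<lambda>y. partial p y j)"
      using pbs_meas(2)[OF p, of 0 j] pbu_family[of "{0}" "\<lambda>y. partial p y j" 0 UNIV] unfolding pm_def by auto
  qed
  ultimately show ?thesis
    using gw_int[OF gw, of "\<lambda>y. g y * p y"] gw_int[OF gw, of "\<lambda>y. partial p y j"] gm
    unfolding Lw_def by (simp add: integral_add)
qed

lemma pbs_const'[simp]: "pbs S (\<lambda>\<tau> x. c)"
  by (rule pbs_const[where B="\<bar>c\<bar>"]) simp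

lemmas pbs_simps[simp] = pbs_add pbs_mult pbs_diff pbs_uminus pbs_coord

lemma pbs_sum'[simp]: "(\<And>j. j \<in> A \<Longrightarrow> pbs S (f j)) \<Longrightarrow> pbs S (\<lambda>\<tau> x. \<Sum>j\<in>A. f j \<tau> x)"
proof (induction A rule: infinite_finite_induct)
  case (insert a A) then show ?case by simp
qed simp_all

lemma vec_integral_component:
  fixes F :: "'a \<Rightarrow> real^'n"
  assumes "\<And>i. integrable M (\<lambda>y. F y $ i)"
  shows "integrable M F" "(integral\<^sup>L M F) $ i = integral\<^sup>L M (\<lambda>y. F y $ i)"
proof -
  have eq: "F = (\<lambda>y. \<Sum>i\<in>UNIV. F y $ i *\<^sub>R axis i (1::real))"
    by (rule ext) (simp add: vec_eq_iff axis_def if_distrib cong: if_cong)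
  show I: "integrable M F"
    by (subst eq) (use assms in \<open>auto intro!: integrable_sum integrable_scaleR_left\<close>)
  show "(integral\<^sup>L M F) $ i = integral\<^sup>L M (\<lambda>y. F y $ i)"
    using integral_bounded_linear[OF bounded_linear_vec_nth I, of i] by simp
qed

context LS
begin

definition "m0 \<tau> = integral\<^sup>L lborel (us \<tau>)"
definition "m1 \<tau> k = Lw (us \<tau>) (\<lambda>y. y $ k)"
definition "M2 \<tau> k l = Lw (us \<tau>) (\<lambda>y. y $ k * y $ l)"
definition "T2 \<tau> = (\<Sum>k\<in>UNIV. M2 \<tau> k k)"
definition "dd = real CARD('d) - 1"

definition "Dc \<tau> x i j = (if i = j then m0 \<tau> * (\<Sum>k\<in>UNIV. x $ k * x $ k) - 2 * (\<Sum>k\<in>UNIV. x $ k * m1 \<tau> k) + T2 \<tau> else 0)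
    - (m0 \<tau> * (x $ i * x $ j) - x $ i * m1 \<tau> j - m1 \<tau> i * x $ j + M2 \<tau> i j)"

definition "Wst \<tau> x i = - (\<Sum>j\<in>UNIV. Dc \<tau> x i j * gs \<tau> x $ j) - dd * (m0 \<tau> * x $ i - m1 \<tau> i)"

definition "Aij (z::real^'d) i j = (if i = j then (\<Sum>k\<in>UNIV. z $ k * z $ k) else 0) - z $ i * z $ j"

lemma landauA_Aij: "landauA z $ i $ j = Aij z i j"
  by (simp add: landauA_def Aij_def power2_norm_eq_inner inner_vec_def)

lemma gw_us: "\<tau> \<ge> 0 \<Longrightarrow> gw (us \<tau>)"
  using gbs_gw[OF gbs_us[of \<tau>], of \<tau>] by simp

lemma pm_gs: "\<tau> \<ge> 0 \<Longrightarrow> pm (\<lambda>y. gs \<tau> y $ j)"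
  using pbs_pm[OF pbs_gs[of \<tau> j], of \<tau>] by simp

lemma Lw_const[simp]: "Lw w (\<lambda>y. c) = c * integral\<^sup>L lborel w"
  unfolding Lw_def by (simp add: mult.commute)

lemma Lw_Aij: "\<tau> \<ge> 0 \<Longrightarrow> Lw (us \<tau>) (\<lambda>y. Aij (x - y) i j) = Dc \<tau> x i j"
proof -
  assume t: "\<tau> \<ge> 0"
  note g = gw_us[OF t]
  have "Lw (us \<tau>) (\<lambda>y. Aij (x - y) i j) = Lw (us \<tau>) (\<lambda>y. (if i = j then (\<Sum>k\<in>UNIV. x $ k * x $ k - 2 * (x $ k * y $ k) + y $ k * y $ k) else 0)
      - (x $ i * x $ j - x $ i * y $ j - y $ i * x $ j + y $ i * y $ j))"
    by (rule arg_cong[where f="Lw (us \<tau>)"]) (auto simp: Aij_def algebra_simps)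
  also have "\<dots> = Dc \<tau> x i j"
    using g by (cases "i = j") (simp_all add: Dc_def m0_def m1_def M2_def T2_def sum_subtractf sum.distrib
        sum_distrib_left algebra_simps)
  finally show ?thesis .
qed

lemma pm_Aij[simp]: "pm (\<lambda>y. Aij (x - y) i j)"
  by (cases "i = j") (simp_all add: Aij_def)

lemma pbs_Aij: "pbs S (\<lambda>_ y. Aij (x - y) i j)"
  by (cases "i = j") (simp_all add: Aij_def)

lemma partial_Aij: "partial (\<lambda>y. Aij (x - y) i j) y j = (if i = j then - (x $ j - y $ j) else 0) + (x $ i - y $ i)"
  by (cases "i = j") (simp_all add: Aij_def pd_simps if_distrib cong: if_cong)

lemma sum_partial_Aij: "(\<Sum>j\<in>UNIV. partial (\<lambda>y. Aij (x - y) i j) y j) = dd * (x $ i - y $ i)"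
proof -
  have "(\<Sum>j\<in>UNIV. partial (\<lambda>y. Aij (x - y) i j) y j)
      = (\<Sum>j\<in>UNIV. (if i = j then - (x $ j - y $ j) else 0)) + (\<Sum>j\<in>(UNIV::'d set). (x $ i - y $ i))"
    by (simp add: partial_Aij sum.distrib)
  also have "\<dots> = - (x $ i - y $ i) + real CARD('d) * (x $ i - y $ i)"
    by (simp add: if_distrib cong: if_cong)
  finally show ?thesis by (simp add: dd_def algebra_simps)
qed

lemma pm_partial_Aij[simp]: "pm (\<lambda>y. partial (\<lambda>y. Aij (x - y) i j) y j)"
  by (cases "i = j") (simp_all add: partial_Aij)

lemma Lw_Aij_gs:
  assumes t: "\<tau> \<ge> 0"
  shows "(\<Sum>j\<in>UNIV. Lw (us \<tau>) (\<lambda>y. Aij (x - y) i j * gs \<tau> y $ j)) = - dd * (x $ i * m0 \<tau> - m1 \<tau> i)"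
proof -
  have w: "gbs {0} (\<lambda>_. us \<tau>)" using gbs_single[OF gbs_us[OF t], of \<tau> 0] t by simp
  have "Lw (us \<tau>) (\<lambda>y. Aij (x - y) i j * gs \<tau> y $ j) = - Lw (us \<tau>) (\<lambda>y. partial (\<lambda>y. Aij (x - y) i j) y j)" for j
    using weighted_ibp[OF w pbs_Aij, of j "\<lambda>y. gs \<tau> y $ j" x i] partial_us[OF t] pm_gs[OF t, of j]
    by (simp add: mult.commute)
  then have "(\<Sum>j\<in>UNIV. Lw (us \<tau>) (\<lambda>y. Aij (x - y) i j * gs \<tau> y $ j))
     = - Lw (us \<tau>) (\<lambda>y. \<Sum>j\<in>UNIV. partial (\<lambda>y. Aij (x - y) i j) y j)"
    using gw_us[OF t] by (simp add: sum_negf)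
  also have "\<dots> = - Lw (us \<tau>) (\<lambda>y. dd * (x $ i - y $ i))" by (simp only: sum_partial_Aij)
  also have "\<dots> = - dd * (x $ i * m0 \<tau> - m1 \<tau> i)"
    using gw_us[OF t] by (simp add: m0_def m1_def)
  finally show ?thesis .
qed

lemma landau_vel_Wst:
  assumes t: "\<tau> \<ge> 0"
  shows "landau_vel us \<tau> x $ i = Wst \<tau> x i"
proof -
  define F where "F y = us \<tau> y *\<^sub>R (landauA (x - y) *v (gs \<tau> x - gs \<tau> y))" for y
  have Fi: "F y $ i' = us \<tau> y * (\<Sum>j\<in>UNIV. Aij (x - y) i' j * (gs \<tau> x $ j - gs \<tau> y $ j))" for y i'
    by (simp add: F_def matrix_vector_mult_def landauA_Aij)
  note pg = pm_gs[OF t] and g = gw_us[OF t]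
  have int: "integrable lborel (\<lambda>y. F y $ i')" for i'
    unfolding Fi using pg by (intro gw_int[OF g]) simp
  have "landau_vel us \<tau> x $ i = - (integral\<^sup>L lborel F) $ i"
    unfolding landau_vel_def F_def[abs_def] gs_def by simp
  also have "\<dots> = - Lw (us \<tau>) (\<lambda>y. \<Sum>j\<in>UNIV. Aij (x - y) i j * (gs \<tau> x $ j - gs \<tau> y $ j))"
    using vec_integral_component(2)[OF int, of i] by (simp add: Fi Lw_def)
  also have "\<dots> = - (\<Sum>j\<in>UNIV. Dc \<tau> x i j * gs \<tau> x $ j - Lw (us \<tau>) (\<lambda>y. Aij (x - y) i j * gs \<tau> y $ j))"
    using g pg t by (simp add: right_diff_distrib Lw_Aij)
  also have "\<dots> = Wst \<tau> x i"
    using Lw_Aij_gs[OF t, of x i] by (simp add: Wst_def sum_subtractf algebra_simps)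
  finally show ?thesis .
qed

end

lemma gbs_Lw_bounded:
  assumes w: "gbs S w" and p: "pm p"
  shows "\<exists>B. \<forall>\<tau>\<in>S. \<bar>Lw (w \<tau>) p\<bar> \<le> B"
proof -
  have "gbu S (\<lambda>\<tau> y. w \<tau> y * p y)"
    using w p unfolding gbs_def pm_def pbu_def by (intro gbu_mult_pbu) (auto simp: pbu_def)
  then obtain G :: "real^'a \<Rightarrow> real" where G: "integrable lborel G" "\<And>\<tau> x. \<tau> \<in> S \<Longrightarrow> \<bar>w \<tau> x * p x\<bar> \<le> G x"
    by (rule gbu_dominated) blast
  have "\<bar>Lw (w \<tau>) p\<bar> \<le> integral\<^sup>L lborel G" if "\<tau> \<in> S" for \<tau>
  proof -
    have gw: "gw (w \<tau>)" using gbs_gw[OF w that] .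
    have "\<bar>Lw (w \<tau>) p\<bar> = norm (integral\<^sup>L lborel (\<lambda>y. w \<tau> y * p y))" by (simp add: Lw_def)
    also have "\<dots> \<le> integral\<^sup>L lborel (\<lambda>y. norm (w \<tau> y * p y))" by (rule integral_norm_bound)
    also have "\<dots> \<le> integral\<^sup>L lborel G"
      by (rule integral_mono[OF integrable_norm[OF gw_int[OF gw p]] G(1)]) (use G(2)[OF that] in auto)
    finally show ?thesis .
  qed
  then show ?thesis by blast
qed

context LS
begin

lemma m0_eq: "m0 \<tau> = Lw (us \<tau>) (\<lambda>y. 1)" by (simp add: m0_def)

lemma bounded_mom:
  assumes "T \<ge> 0" "pm p" shows "\<exists>B. \<forall>\<tau>\<in>{0..T}. \<bar>Lw (us \<tau>) p\<bar> \<le> B"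
  by (rule gbs_Lw_bounded[OF gbs_us[OF assms(1)] assms(2)])

lemma pbs_m0: "T \<ge> 0 \<Longrightarrow> pbs {0..T} (\<lambda>\<tau> x. m0 \<tau>)"
  using bounded_mom[of T "\<lambda>y. 1"] by (auto simp: m0_eq intro: pbs_const)

lemma pbs_m1: "T \<ge> 0 \<Longrightarrow> pbs {0..T} (\<lambda>\<tau> x. m1 \<tau> k)"
  using bounded_mom[of T "\<lambda>y. y $ k"] by (auto simp: m1_def intro: pbs_const)

lemma pbs_M2: "T \<ge> 0 \<Longrightarrow> pbs {0..T} (\<lambda>\<tau> x. M2 \<tau> k l)"
  using bounded_mom[of T "\<lambda>y. y $ k * y $ l"] by (auto simp: M2_def intro: pbs_const)

lemma pbs_T2: "T \<ge> 0 \<Longrightarrow> pbs {0..T} (\<lambda>\<tau> x. T2 \<tau>)"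
  unfolding T2_def by (simp add: pbs_M2)

lemma pbs_Dc: "T \<ge> 0 \<Longrightarrow> pbs {0..T} (\<lambda>\<tau> x. Dc \<tau> x i j)"
  by (cases "i = j") (simp_all add: Dc_def pbs_m0 pbs_m1 pbs_M2 pbs_T2)

lemma pbs_Wst: "T \<ge> 0 \<Longrightarrow> pbs {0..T} (\<lambda>\<tau> x. Wst \<tau> x i)"
  by (simp add: Wst_def pbs_m0 pbs_m1 pbs_Dc pbs_gs)

definition "Wu \<tau> y i = bfield (us 0) y $ i - (\<Sum>j\<in>UNIV. Dmat (us 0) \<tau> y $ i $ j * s \<tau> y $ j)"

lemma Sigma_bound: "\<tau> \<ge> 0 \<Longrightarrow> \<bar>Sigma f \<tau> i j\<bar> \<le> \<bar>SigmaInf f i j\<bar> + \<bar>SigmaInf f i j - Sigma0 f i j\<bar>"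
proof -
  assume t: "\<tau> \<ge> 0"
  have e: "exp (- 4 * real CARD('a) * \<tau>) \<le> 1" using t by simp
  have "\<bar>(SigmaInf f i j - Sigma0 f i j) * exp (- 4 * real CARD('a) * \<tau>)\<bar> \<le> \<bar>SigmaInf f i j - Sigma0 f i j\<bar>"
    using e by (simp add: abs_mult mult_left_le)
  then show ?thesis unfolding Sigma_def by linarith
qed

lemma Dmat_eq: "Dmat f \<tau> x $ i $ j = (if i = j then (\<Sum>k\<in>UNIV. x $ k * x $ k) + twoE f - 2 * (\<Sum>k\<in>UNIV. meanV f $ k * x $ k) else 0)
        + meanV f $ i * x $ j + meanV f $ j * x $ i - x $ i * x $ j - Sigma f \<tau> i j"
  by (simp add: Dmat_def power2_norm_eq_inner inner_vec_def)

lemma pbs_Sigma: "T \<ge> 0 \<Longrightarrow> pbs {0..T} (\<lambda>\<tau> x. Sigma f \<tau> i j)"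
  by (rule pbs_const[OF Sigma_bound]) auto

lemma pbs_Dmat: "T \<ge> 0 \<Longrightarrow> pbs {0..T} (\<lambda>\<tau> x. Dmat f \<tau> x $ i $ j)"
  by (cases "i = j") (simp_all add: Dmat_eq pbs_Sigma)

lemma pbs_Wu: "T \<ge> 0 \<Longrightarrow> pbs {0..T} (\<lambda>\<tau> x. Wu \<tau> x i)"
  by (simp add: Wu_def bfield_def pbs_Dmat pbs_s)

lemma us_deriv:
  assumes t: "\<tau> \<ge> 0"
  shows "((\<lambda>\<sigma>. us \<sigma> x) has_real_derivative - (\<Sum>i\<in>UNIV. partial (\<lambda>y. us \<tau> y * Wst \<tau> y i) x i)) (at \<tau> within {0..})"
proof -
  have dv: "(\<lambda>y. us \<tau> y *\<^sub>R landau_vel us \<tau> y) differentiable (at x)" using diff t by auto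
  have "(\<lambda>y. (us \<tau> y *\<^sub>R landau_vel us \<tau> y) $ i) = (\<lambda>y. us \<tau> y * Wst \<tau> y i)" for i
    by (rule ext) (simp add: landau_vel_Wst[OF t])
  then have "divg (\<lambda>y. us \<tau> y *\<^sub>R landau_vel us \<tau> y) x = (\<Sum>i\<in>UNIV. partial (\<lambda>y. us \<tau> y * Wst \<tau> y i) x i)"
    by (simp add: divg_partial[OF dv])
  moreover have "((\<lambda>\<sigma>. us \<sigma> x) has_real_derivative - divg (\<lambda>y. us \<tau> y *\<^sub>R landau_vel us \<tau> y) x) (at \<tau> within {0..})"
    using landau t by blast
  ultimately show ?thesis by simp
qed

lemma u_deriv:
  assumes t: "\<tau> \<ge> 0"
  shows "((\<lambda>\<sigma>. u \<sigma> x) has_real_derivative - (\<Sum>i\<in>UNIV. partial (\<lambda>y. u \<tau> y * Wu \<tau> y i) x i)) (at \<tau> within {0..})"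
proof -
  have comp: "(\<lambda>y. (u \<tau> y *\<^sub>R (bfield (us 0) y - Dmat (us 0) \<tau> y *v s \<tau> y)) $ i) = (\<lambda>y. u \<tau> y * Wu \<tau> y i)" for i
    by (rule ext) (simp add: Wu_def matrix_vector_mult_def)
  have dw: "(\<lambda>y. u \<tau> y * Wu \<tau> y i) differentiable (at x)" for i
    using pbs_Wu[OF t, of i] t diff_u[OF t] unfolding pbs_def by (auto intro: differentiable_mult)
  have dv: "(\<lambda>y. u \<tau> y *\<^sub>R (bfield (us 0) y - Dmat (us 0) \<tau> y *v s \<tau> y)) differentiable (at x)"
  proof (rule differentiable_vec_lambda)
    fix i show "(\<lambda>y. (u \<tau> y *\<^sub>R (bfield (us 0) y - Dmat (us 0) \<tau> y *v s \<tau> y)) $ i) differentiable (at x)"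
      unfolding comp by (rule dw)
  qed
  have "divg (\<lambda>y. u \<tau> y *\<^sub>R (bfield (us 0) y - Dmat (us 0) \<tau> y *v s \<tau> y)) x = (\<Sum>i\<in>UNIV. partial (\<lambda>y. u \<tau> y * Wu \<tau> y i) x i)"
    by (subst divg_partial[OF dv]) (simp only: comp)
  moreover have "((\<lambda>\<sigma>. u \<sigma> x) has_real_derivative - divg (\<lambda>y. u \<tau> y *\<^sub>R (bfield (us 0) y - Dmat (us 0) \<tau> y *v s \<tau> y)) x) (at \<tau> within {0..})"
    using continuity t by blast
  ultimately show ?thesis by simp
qed

end

lemma at_within_Icc_ge: "(t::real) \<ge> 0 \<Longrightarrow> at t within {0..t+1} = at t within {0..}"
  by (rule at_within_nhd[where S="{..<t+1}"]) auto

lemma pbs_family: "pbs S (\<lambda>_. f) \<Longrightarrow> \<tau> \<in> S \<Longrightarrow> pbs S' (\<lambda>_. f)"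
  unfolding pbs_def pbu_def by blast

lemma pbs_partial_pm: "pbs S f \<Longrightarrow> \<tau> \<in> S \<Longrightarrow> pm (\<lambda>y. partial (f \<tau>) y i)"
  unfolding pm_def using pbs_meas(2)[of S f \<tau> i] unfolding pbs_def pbu_def by blast

lemma gen_deriv:
  fixes w :: "real \<Rightarrow> real^'d \<Rightarrow> real" and W :: "real \<Rightarrow> real^'d \<Rightarrow> 'd \<Rightarrow> real" and \<phi> :: "real^'d \<Rightarrow> real"
  assumes w: "\<And>T. T \<ge> 0 \<Longrightarrow> gbs {0..T} w"
    and W: "\<And>T i. T \<ge> 0 \<Longrightarrow> pbs {0..T} (\<lambda>\<tau> y. W \<tau> y i)"
    and der: "\<And>\<tau> x. \<tau> \<ge> 0 \<Longrightarrow> ((\<lambda>\<sigma>. w \<sigma> x) has_real_derivative - (\<Sum>i\<in>UNIV. partial (\<lambda>y. w \<tau> y * W \<tau> y i) x i)) (at \<tau> within {0..})"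
    and \<phi>: "pbs {0} (\<lambda>_. \<phi>)"
    and t: "t \<ge> 0"
  shows "((\<lambda>\<tau>. Lw (w \<tau>) \<phi>) has_real_derivative Lw (w t) (\<lambda>y. \<Sum>i\<in>UNIV. partial \<phi> y i * W t y i)) (at t within {0..})"
proof -
  define I where "I = {0..t+1}"
  have tI: "t \<in> I" using t by (simp add: I_def)
  have wI: "gbs I w" using w t by (simp add: I_def)
  have \<phi>I: "pbs I (\<lambda>_. \<phi>)" using pbs_family[OF \<phi>] by blast
  have WI': "pbs I (\<lambda>\<tau> y. W \<tau> y i)" for i using W[of "t+1" i] t by (simp add: I_def)
  have WI: "gbs I (\<lambda>\<tau> y. w \<tau> y * W \<tau> y i)" for i using gbs_mult[OF wI WI'[of i]] by simp
  define f where "f \<tau> y = w \<tau> y * \<phi> y" for \<tau> y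
  define g where "g \<tau> y = - (\<Sum>i\<in>UNIV. partial (\<lambda>y. w \<tau> y * W \<tau> y i) y i) * \<phi> y" for \<tau> y
  have dI: "((\<lambda>\<sigma>. f \<sigma> x) has_real_derivative g \<tau> x) (at \<tau> within I)" if "\<tau> \<in> I" for \<tau> x
  proof -
    have "\<tau> \<ge> 0" using that by (simp add: I_def)
    from DERIV_cmult_right[OF der[OF this, of x], of "\<phi> x"]
    have "((\<lambda>\<sigma>. f \<sigma> x) has_real_derivative g \<tau> x) (at \<tau> within {0..})" by (simp add: f_def g_def)
    then show ?thesis by (rule DERIV_subset) (auto simp: I_def)
  qed
  have fi: "integrable lborel (f \<tau>)" if "\<tau> \<in> I" for \<tau>
    using gw_int[OF gbs_gw[OF wI that] pbs_pm[OF \<phi>I that]] by (simp add: f_def[abs_def])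
  have gbuG: "gbu I g"
  proof -
    have "gbu I (\<lambda>\<tau> y. \<Sum>i\<in>UNIV. partial (\<lambda>y. w \<tau> y * W \<tau> y i) y i)"
      using WI unfolding gbs_def by (intro gbu_sum) auto
    then have "gbu I (\<lambda>\<tau> y. - (\<Sum>i\<in>UNIV. partial (\<lambda>y. w \<tau> y * W \<tau> y i) y i) * \<phi> y)"
      using \<phi>I unfolding pbs_def by (intro gbu_mult_pbu gbu_uminus) auto
    then show ?thesis unfolding g_def[abs_def] .
  qed
  then obtain G :: "real^'d \<Rightarrow> real" where G: "integrable lborel G" "\<And>\<tau> x. \<tau> \<in> I \<Longrightarrow> \<bar>g \<tau> x\<bar> \<le> G x"
    by (rule gbu_dominated) blast
  have pm: "(\<lambda>y. partial (\<lambda>y. w t y * W t y i) y i) \<in> borel_measurable borel" for i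
    using gbs_meas(2)[OF WI tI] by simp
  have gm: "g t \<in> borel_measurable lborel"
    unfolding g_def[abs_def] using pm pbs_meas(1)[OF \<phi>I tI] by simp
  have D: "((\<lambda>\<sigma>. integral\<^sup>L lborel (f \<sigma>)) has_real_derivative integral\<^sup>L lborel (g t)) (at t within I)"
    by (rule DUI[OF _ tI dI fi gm G]) (simp add: I_def)
  have eqI: "integral\<^sup>L lborel (g t) = Lw (w t) (\<lambda>y. \<Sum>i\<in>UNIV. partial \<phi> y i * W t y i)"
  proof -
    have part: "integral\<^sup>L lborel (\<lambda>y. - partial (\<lambda>y. w t y * W t y i) y i * \<phi> y)
        = integral\<^sup>L lborel (\<lambda>y. w t y * (partial \<phi> y i * W t y i))" for i
    proof -
      have h: "gbs I (\<lambda>\<tau> y. (w \<tau> y * W \<tau> y i) * \<phi> y)" by (rule gbs_mult[OF WI \<phi>I])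
      have z: "integral\<^sup>L lborel (\<lambda>y. partial (\<lambda>y. (w t y * W t y i) * \<phi> y) y i) = 0"
        using gbs_partial_zero[OF h tI] by simp
      have dd: "(\<lambda>y. w t y * W t y i) differentiable (at y)" "\<phi> differentiable (at y)" for y
        using WI \<phi>I tI unfolding gbs_def pbs_def by auto
      have pe: "partial (\<lambda>y. (w t y * W t y i) * \<phi> y) y i
          = partial (\<lambda>y. w t y * W t y i) y i * \<phi> y + w t y * (partial \<phi> y i * W t y i)" for y
        by (subst partial_mult[OF dd]) (simp add: algebra_simps)
      have i1: "integrable lborel (\<lambda>y. partial (\<lambda>y. w t y * W t y i) y i * \<phi> y)"
      proof -
        have "gbu I (\<lambda>\<tau> y. partial (\<lambda>y. w \<tau> y * W \<tau> y i) y i * \<phi> y)"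
          using WI \<phi>I unfolding gbs_def pbs_def by (intro gbu_mult_pbu) auto
        moreover have "(\<lambda>y. partial (\<lambda>y. w t y * W t y i) y i * \<phi> y) \<in> borel_measurable lborel"
          using pm[of i] pbs_meas(1)[OF \<phi>I tI] by simp
        ultimately show ?thesis using gbu_integrable[of I _ t] tI by auto
      qed
      have i2: "integrable lborel (\<lambda>y. w t y * (partial \<phi> y i * W t y i))"
      proof -
        have "pm (\<lambda>y. partial \<phi> y i * W t y i)"
          using pm_mult[OF pbs_partial_pm[OF \<phi>, of 0 i] pbs_pm[OF WI' tI]] by simp
        then show ?thesis by (rule gw_int[OF gbs_gw[OF wI tI]])
      qed
      show ?thesis using z i1 i2 unfolding pe by (simp add: integral_add)
    qed
    have "integral\<^sup>L lborel (g t) = (\<Sum>i\<in>UNIV. integral\<^sup>L lborel (\<lambda>y. - partial (\<lambda>y. w t y * W t y i) y i * \<phi> y))"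
    proof -
      have "integrable lborel (\<lambda>y. - partial (\<lambda>y. w t y * W t y i) y i * \<phi> y)" for i
      proof -
        have "gbu I (\<lambda>\<tau> y. partial (\<lambda>y. w \<tau> y * W \<tau> y i) y i * \<phi> y)"
          using WI \<phi>I unfolding gbs_def pbs_def by (intro gbu_mult_pbu) auto
        moreover have "(\<lambda>y. - partial (\<lambda>y. w t y * W t y i) y i * \<phi> y) \<in> borel_measurable lborel"
          using pm[of i] pbs_meas(1)[OF \<phi>I tI] by simp
        ultimately show ?thesis using gbu_integrable[of I _ t] tI by auto
      qed
      then show ?thesis unfolding g_def by (simp add: integral_sum[symmetric] sum_distrib_right sum_negf)
    qed
    also have "\<dots> = (\<Sum>i\<in>UNIV. integral\<^sup>L lborel (\<lambda>y. w t y * (partial \<phi> y i * W t y i)))"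
      using part by simp
    also have "\<dots> = Lw (w t) (\<lambda>y. \<Sum>i\<in>UNIV. partial \<phi> y i * W t y i)"
    proof -
      have "pm (\<lambda>y. partial \<phi> y i * W t y i)" for i
          using pm_mult[OF pbs_partial_pm[OF \<phi>, of 0 i] pbs_pm[OF WI' tI]] by simp
      then show ?thesis using gbs_gw[OF wI tI] by (subst Lw_sum) (simp_all add: Lw_def)
    qed
    finally show ?thesis .
  qed
  have "(\<lambda>\<sigma>. integral\<^sup>L lborel (f \<sigma>)) = (\<lambda>\<tau>. Lw (w \<tau>) \<phi>)" by (simp add: f_def[abs_def] Lw_def)
  with D eqI at_within_Icc_ge[OF t] show ?thesis by (simp add: I_def)
qed

lemma delta_mult[simp]: "(if P then 1 else 0) * (a::real) = (if P then a else 0)"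
  "(a::real) * (if P then 1 else 0) = (if P then a else 0)"
  "(a::real) * (if P then b else 0) = (if P then a * b else 0)"
  "(if P then b else 0) * (a::real) = (if P then b * a else 0)"
  by auto

context LS
begin

lemma Lw_gs:
  assumes t: "\<tau> \<ge> 0" and p: "pbs {0} (\<lambda>_. p)"
  shows "Lw (us \<tau>) (\<lambda>y. p y * gs \<tau> y $ j) = - Lw (us \<tau>) (\<lambda>y. partial p y j)"
proof -
  have w: "gbs {0} (\<lambda>_. us \<tau>)" using gbs_single[OF gbs_us[OF t], of \<tau> 0] t by simp
  show ?thesis
    using weighted_ibp[OF w p, of j "\<lambda>y. gs \<tau> y $ j"] partial_us[OF t] pm_gs[OF t, of j]
    by (simp add: mult.commute)
qed

lemma Dc_alt: "Dc \<tau> x i j = (if i = j then 1 else 0) * (m0 \<tau> * (\<Sum>k\<in>UNIV. x $ k * x $ k) - 2 * (\<Sum>k\<in>UNIV. x $ k * m1 \<tau> k) + T2 \<tau>)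
    - (m0 \<tau> * (x $ i * x $ j) - x $ i * m1 \<tau> j - m1 \<tau> i * x $ j + M2 \<tau> i j)"
  by (simp add: Dc_def)

lemma sum_partial_Dc: "(\<Sum>j\<in>UNIV. partial (\<lambda>y. Dc \<tau> y k j) y j) = - dd * (m0 \<tau> * y $ k - m1 \<tau> k)"
proof -
  have "partial (\<lambda>y. Dc \<tau> y k j) y j = (if k = j then 1 else 0) * (2 * m0 \<tau> * y $ j - 2 * m1 \<tau> j)
      - (m0 \<tau> * ((if k = j then 1 else 0) * y $ j + y $ k) - (if k = j then 1 else 0) * m1 \<tau> j - m1 \<tau> k)" for j
    unfolding Dc_alt by (simp add: pd_simps diff_sum algebra_simps)
  then have "(\<Sum>j\<in>UNIV. partial (\<lambda>y. Dc \<tau> y k j) y j) = (\<Sum>j\<in>UNIV. (if k = j then 1 else 0) * (2 * m0 \<tau> * y $ j - 2 * m1 \<tau> j)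
      - (m0 \<tau> * ((if k = j then 1 else 0) * y $ j + y $ k) - (if k = j then 1 else 0) * m1 \<tau> j - m1 \<tau> k))"
    by simp
  also have "\<dots> = (2 * m0 \<tau> * y $ k - 2 * m1 \<tau> k) - (m0 \<tau> * y $ k + real CARD('d) * m0 \<tau> * y $ k - m1 \<tau> k - real CARD('d) * m1 \<tau> k)"
    by (simp add: sum.distrib sum_subtractf algebra_simps)
  finally show ?thesis by (simp add: dd_def algebra_simps)
qed

lemma mom_deriv:
  assumes "pbs {0} (\<lambda>_. \<phi>)" "t \<ge> 0"
  shows "((\<lambda>\<tau>. Lw (us \<tau>) \<phi>) has_real_derivative Lw (us t) (\<lambda>y. \<Sum>i\<in>UNIV. partial \<phi> y i * Wst t y i)) (at t within {0..})"
  by (rule gen_deriv[OF gbs_us pbs_Wst us_deriv assms])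

lemma const_on:
  fixes f :: "real \<Rightarrow> real"
  assumes "\<And>\<tau>. \<tau> \<ge> 0 \<Longrightarrow> (f has_real_derivative 0) (at \<tau> within {0..})" "\<tau> \<ge> 0"
  shows "f \<tau> = f 0"
proof -
  have "\<exists>c. \<forall>x\<in>{0..}. f x = c"
    by (rule has_derivative_zero_constant[of "{0::real..}"])
       (use assms(1) in \<open>auto simp: has_field_derivative_def mult_zero_left[abs_def]\<close>)
  then show ?thesis using assms(2) by force
qed

lemma pm_Dc: "\<tau> \<ge> 0 \<Longrightarrow> pm (\<lambda>y. Dc \<tau> y i j)"
  using pbs_pm[OF pbs_Dc[of \<tau> i j], of \<tau>] by simp

lemma pbs0_Dc: "\<tau> \<ge> 0 \<Longrightarrow> pbs {0} (\<lambda>_ y. Dc \<tau> y i j)"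
  using pbs_single[OF pbs_Dc[of \<tau> i j], of \<tau>] by simp

lemma m0_one: "\<tau> \<ge> 0 \<Longrightarrow> m0 \<tau> = 1"
proof -
  have eq: "Lw (us \<tau>) (\<lambda>y. 1) = m0 \<tau>" for \<tau> by (simp add: m0_def)
  have "((\<lambda>\<tau>. Lw (us \<tau>) (\<lambda>y. 1)) has_real_derivative 0) (at \<tau> within {0..})" if "\<tau> \<ge> 0" for \<tau>
    using mom_deriv[of "\<lambda>y. 1" \<tau>] that by (simp add: partial_const)
  then have "\<And>\<tau>. \<tau> \<ge> 0 \<Longrightarrow> (m0 has_real_derivative 0) (at \<tau> within {0..})"
    unfolding m0_def[abs_def] by simp
  moreover have "m0 0 = 1" using mass(2) by (simp add: m0_def)
  ultimately show "\<tau> \<ge> 0 \<Longrightarrow> m0 \<tau> = 1" using const_on[of m0 \<tau>] by simp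
qed

lemma Lw_Wst: "t \<ge> 0 \<Longrightarrow> Lw (us t) (\<lambda>y. Wst t y k) = 0"
proof -
  assume t: "t \<ge> 0"
  note g = gw_us[OF t] and pg = pm_gs[OF t] and pD = pm_Dc[OF t]
  have "Lw (us t) (\<lambda>y. Wst t y k) = - (\<Sum>j\<in>UNIV. Lw (us t) (\<lambda>y. Dc t y k j * gs t y $ j)) - dd * (m0 t * m1 t k - m1 t k * m0 t)"
    unfolding Wst_def using g pg pD by (simp add: m1_def m0_def)
  also have "\<dots> = Lw (us t) (\<lambda>y. \<Sum>j\<in>UNIV. partial (\<lambda>y. Dc t y k j) y j)"
    using Lw_gs[OF t pbs0_Dc[OF t]] g pbs_partial_pm[OF pbs0_Dc[OF t]] by (simp add: sum_negf)
  also have "\<dots> = 0"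
    using g by (simp add: sum_partial_Dc m0_def m1_def)
  finally show ?thesis .
qed

lemma m1_const: "\<tau> \<ge> 0 \<Longrightarrow> m1 \<tau> k = m1 0 k"
proof -
  have "((\<lambda>\<tau>. m1 \<tau> k) has_real_derivative 0) (at \<tau> within {0..})" if "\<tau> \<ge> 0" for \<tau>
    using mom_deriv[of "\<lambda>y. y $ k" \<tau>] that by (simp add: partial_coord Lw_Wst m1_def)
  then show "\<tau> \<ge> 0 \<Longrightarrow> m1 \<tau> k = m1 0 k" using const_on[of "\<lambda>\<tau>. m1 \<tau> k" \<tau>] by simp
qed

lemma M2_sym: "M2 \<tau> l k = M2 \<tau> k l"
  by (simp add: M2_def mult.commute)

lemma pbs0_coord_Dc: "\<tau> \<ge> 0 \<Longrightarrow> pbs {0} (\<lambda>_ y. y $ l * Dc \<tau> y k j)"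
  using pbs_mult[OF pbs_coord[of "{0}" l] pbs0_Dc] by simp

lemma Lw_mult_cmult[simp]: "Lw w (\<lambda>y. p y * (c * q y)) = c * Lw w (\<lambda>y. p y * q y)"
  using Lw_cmult[of w c "\<lambda>y. p y * q y"] by (simp add: mult.left_commute)

lemma Lw_Dc: "t \<ge> 0 \<Longrightarrow> Lw (us t) (\<lambda>y. Dc t y k l) =
   (if k = l then 2 * (m0 t * T2 t - (\<Sum>m\<in>UNIV. m1 t m * m1 t m)) else 0) - (2 * m0 t * M2 t k l - 2 * m1 t k * m1 t l)"
proof -
  assume t: "t \<ge> 0"
  note g = gw_us[OF t]
  show ?thesis
  proof (cases "k = l")
    case True
    have "Lw (us t) (\<lambda>y. Dc t y k l) = m0 t * T2 t - 2 * (\<Sum>n\<in>UNIV. m1 t n * m1 t n) + T2 t * m0 t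
       - (m0 t * M2 t k k - m1 t k * m1 t k - m1 t k * m1 t k + M2 t k k * m0 t)"
      unfolding Dc_def using g True
      by (simp add: m0_def[symmetric] m1_def[symmetric] M2_def[symmetric] T2_def)
    then show ?thesis using True by (simp add: algebra_simps)
  next
    case False
    have "Lw (us t) (\<lambda>y. Dc t y k l) = - (m0 t * M2 t k l - m1 t k * m1 t l - m1 t k * m1 t l + M2 t k l * m0 t)"
      unfolding Dc_def using g False
      by (simp add: m0_def[symmetric] m1_def[symmetric] M2_def[symmetric])
    then show ?thesis using False by (simp add: algebra_simps)
  qed
qed

lemma Lw_yWst: "t \<ge> 0 \<Longrightarrow> Lw (us t) (\<lambda>y. y $ l * Wst t y k) =
    Lw (us t) (\<lambda>y. Dc t y k l) - 2 * dd * (m0 t * M2 t k l - m1 t k * m1 t l)"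
proof -
  assume t: "t \<ge> 0"
  note g = gw_us[OF t] and pg = pm_gs[OF t] and pD = pm_Dc[OF t]
  have "(\<lambda>y. y $ l * Wst t y k) = (\<lambda>y. - (\<Sum>j\<in>UNIV. (y $ l * Dc t y k j) * gs t y $ j) - dd * (m0 t * (y $ l * y $ k) - y $ l * m1 t k))"
    by (rule ext) (simp add: Wst_def sum_distrib_left algebra_simps)
  then have "Lw (us t) (\<lambda>y. y $ l * Wst t y k) = - (\<Sum>j\<in>UNIV. Lw (us t) (\<lambda>y. (y $ l * Dc t y k j) * gs t y $ j))
       - dd * (m0 t * M2 t l k - m1 t l * m1 t k)"
    using g pg pD by (simp add: m1_def[symmetric] M2_def[symmetric])
  also have "\<dots> = Lw (us t) (\<lambda>y. \<Sum>j\<in>UNIV. partial (\<lambda>y. y $ l * Dc t y k j) y j) - dd * (m0 t * M2 t l k - m1 t l * m1 t k)"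
    using Lw_gs[OF t pbs0_coord_Dc[OF t]] g pbs_partial_pm[OF pbs0_coord_Dc[OF t]] by (simp add: sum_negf)
  also have "(\<lambda>y. \<Sum>j\<in>UNIV. partial (\<lambda>y. y $ l * Dc t y k j) y j) = (\<lambda>y. Dc t y k l - dd * (m0 t * (y $ l * y $ k) - y $ l * m1 t k))"
  proof (rule ext)
    fix y :: "real^'d"
    have d: "(\<lambda>y. Dc t y k j) differentiable (at y)" for j
      using pbs_Dc[of t k j] t unfolding pbs_def by auto
    have "(\<Sum>j\<in>UNIV. partial (\<lambda>y. y $ l * Dc t y k j) y j) = (\<Sum>j\<in>UNIV. (if j = l then Dc t y k j else 0) + y $ l * partial (\<lambda>y. Dc t y k j) y j)"
      by (simp add: partial_mult[OF diff_coord d] partial_coord cong: if_cong)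
    also have "\<dots> = Dc t y k l + y $ l * (- dd * (m0 t * y $ k - m1 t k))"
      by (simp add: sum.distrib sum_distrib_left[symmetric] sum_partial_Dc)
    finally show "(\<Sum>j\<in>UNIV. partial (\<lambda>y. y $ l * Dc t y k j) y j) = Dc t y k l - dd * (m0 t * (y $ l * y $ k) - y $ l * m1 t k)"
      by (simp add: algebra_simps)
  qed
  also have "Lw (us t) (\<lambda>y. Dc t y k l - dd * (m0 t * (y $ l * y $ k) - y $ l * m1 t k)) =
      Lw (us t) (\<lambda>y. Dc t y k l) - dd * (m0 t * M2 t l k - m1 t l * m1 t k)"
    using g pD by (simp add: m1_def[symmetric] M2_def[symmetric])
  finally show ?thesis by (simp add: M2_sym algebra_simps)
qed

end

context LS
begin

definition "cc k = m1 0 k"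
definition "n2 = (\<Sum>m\<in>UNIV. cc m * cc m)"

lemma pm_Wst: "t \<ge> 0 \<Longrightarrow> pm (\<lambda>y. Wst t y k)"
  using pbs_pm[OF pbs_Wst[of t k], of t] by simp

lemma M2_deriv:
  assumes t: "t \<ge> 0"
  shows "((\<lambda>\<tau>. M2 \<tau> k l) has_real_derivative
     (4 * (if k = l then T2 t - n2 else 0) - 4 * real CARD('d) * (M2 t k l - cc k * cc l))) (at t within {0..})"
proof -
  have p0: "pbs {0} (\<lambda>_ y. y $ k * y $ l)" by simp
  have e: "(\<lambda>y. \<Sum>i\<in>UNIV. partial (\<lambda>y. y $ k * y $ l) y i * Wst t y i) = (\<lambda>y. y $ l * Wst t y k + y $ k * Wst t y l)"
    by (rule ext) (simp add: partial_mult partial_coord sum.distrib algebra_simps cong: if_cong)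
  have "Lw (us t) (\<lambda>y. y $ l * Wst t y k + y $ k * Wst t y l) = Lw (us t) (\<lambda>y. y $ l * Wst t y k) + Lw (us t) (\<lambda>y. y $ k * Wst t y l)"
    using gw_us[OF t] pm_Wst[OF t] by simp
  also have "\<dots> = 4 * (if k = l then T2 t - n2 else 0) - 4 * real CARD('d) * (M2 t k l - cc k * cc l)"
    using t by (simp add: Lw_yWst Lw_Dc m0_one m1_const cc_def[symmetric] n2_def M2_sym dd_def algebra_simps)
  finally show ?thesis using mom_deriv[OF p0 t] unfolding e M2_def by simp
qed

lemma T2_const: "\<tau> \<ge> 0 \<Longrightarrow> T2 \<tau> = T2 0"
proof -
  have "(T2 has_real_derivative 0) (at t within {0..})" if t: "t \<ge> 0" for t
  proof -
    have "((\<lambda>\<tau>. \<Sum>k\<in>UNIV. M2 \<tau> k k) has_real_derivative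
        (\<Sum>k\<in>UNIV. 4 * (T2 t - n2) - 4 * real CARD('d) * (M2 t k k - cc k * cc k))) (at t within {0..})"
    proof (intro DERIV_sum)
      fix k :: 'd
      show "((\<lambda>\<tau>. M2 \<tau> k k) has_real_derivative 4 * (T2 t - n2) - 4 * real CARD('d) * (M2 t k k - cc k * cc k)) (at t within {0..})"
        using M2_deriv[OF t, of k k] by simp
    qed
    also have "(\<Sum>k\<in>UNIV. 4 * (T2 t - n2) - 4 * real CARD('d) * (M2 t k k - cc k * cc k)) = 0"
    proof -
      have "(\<Sum>k\<in>UNIV. 4 * (T2 t - n2) - 4 * real CARD('d) * (M2 t k k - cc k * cc k))
          = real CARD('d) * (4 * (T2 t - n2)) - 4 * real CARD('d) * ((\<Sum>k\<in>UNIV. M2 t k k) - (\<Sum>k\<in>UNIV. cc k * cc k))"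
        by (simp only: sum_subtractf sum_distrib_left[symmetric] sum_constant card_UNIV) (simp add: algebra_simps)
      then show ?thesis by (simp add: T2_def[symmetric] n2_def[symmetric])
    qed
    finally show ?thesis unfolding T2_def[abs_def] .
  qed
  then show "\<tau> \<ge> 0 \<Longrightarrow> T2 \<tau> = T2 0" using const_on[of T2 \<tau>] by simp
qed

definition "Sinf k l = ((if k = l then T2 0 - n2 else 0) + real CARD('d) * cc k * cc l) / real CARD('d)"

lemma M2_sol: "\<tau> \<ge> 0 \<Longrightarrow> M2 \<tau> k l = Sinf k l - (Sinf k l - M2 0 k l) * exp (- 4 * real CARD('d) * \<tau>)"
proof -
  define d where "d = real CARD('d)"
  have dpos: "d > 0" by (simp add: d_def)
  define h where "h \<tau> = (M2 \<tau> k l - Sinf k l) * exp (4 * d * \<tau>)" for \<tau>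
  have "(h has_real_derivative 0) (at t within {0..})" if t: "t \<ge> 0" for t
  proof -
    have "(h has_real_derivative ((4 * (if k = l then T2 t - n2 else 0) - 4 * d * (M2 t k l - cc k * cc l)) * exp (4 * d * t)
        + (M2 t k l - Sinf k l) * (exp (4 * d * t) * (4 * d)))) (at t within {0..})"
      unfolding h_def using M2_deriv[OF t] by (auto simp: d_def intro!: derivative_eq_intros)
    moreover have "(4 * (if k = l then T2 t - n2 else 0) - 4 * d * (M2 t k l - cc k * cc l)) * exp (4 * d * t)
        + (M2 t k l - Sinf k l) * (exp (4 * d * t) * (4 * d)) = 0"
      using dpos T2_const[OF t] by (simp add: Sinf_def d_def[symmetric] field_simps)
    ultimately show ?thesis by simp
  qed
  then have "\<tau> \<ge> 0 \<Longrightarrow> h \<tau> = h 0" using const_on[of h \<tau>] by simp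
  moreover assume "\<tau> \<ge> 0"
  ultimately have "(M2 \<tau> k l - Sinf k l) * exp (4 * d * \<tau>) = M2 0 k l - Sinf k l" by (simp add: h_def)
  then have "M2 \<tau> k l - Sinf k l = (M2 0 k l - Sinf k l) * exp (- 4 * d * \<tau>)"
    by (simp add: exp_minus field_simps)
  then show ?thesis by (simp add: d_def algebra_simps)
qed

end

context LS
begin

lemma m1_cc: "\<tau> \<ge> 0 \<Longrightarrow> m1 \<tau> k = cc k"
  using m1_const[of \<tau> k] by (simp add: cc_def)

lemma meanV_cc: "meanV (us 0) $ k = cc k"
proof -
  have g: "gw (us 0)" using gw_us[of 0] by simp
  have "integrable lborel (\<lambda>x. (us 0 x *\<^sub>R x) $ i)" for i
    using gw_int[OF g pm_coord[of i]] by simp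
  from vec_integral_component(2)[OF this, of k]
  show ?thesis by (simp add: meanV_def cc_def m1_def Lw_def)
qed

lemma twoE_T2: "twoE (us 0) = T2 0"
proof -
  have g: "gw (us 0)" using gw_us[of 0] by simp
  have "twoE (us 0) = Lw (us 0) (\<lambda>y. \<Sum>k\<in>UNIV. y $ k * y $ k)"
    by (simp add: twoE_def Lw_def power2_norm_eq_inner inner_vec_def mult.commute)
  also have "\<dots> = T2 0" using g by (simp add: T2_def M2_def)
  finally show ?thesis .
qed

lemma Sigma0_M2: "Sigma0 (us 0) k l = M2 0 k l"
  by (simp add: Sigma0_def M2_def Lw_def mult.commute)

lemma norm_meanV: "(norm (meanV (us 0)))\<^sup>2 = n2"
  by (simp add: power2_norm_eq_inner inner_vec_def meanV_cc n2_def)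

lemma SigmaInf_Sinf: "SigmaInf (us 0) k l = Sinf k l"
  by (simp add: SigmaInf_def Sinf_def twoE_T2 norm_meanV meanV_cc mult.assoc)

lemma Sigma_M2: "\<tau> \<ge> 0 \<Longrightarrow> Sigma (us 0) \<tau> k l = M2 \<tau> k l"
proof -
  assume t: "\<tau> \<ge> 0"
  show ?thesis using M2_sol[OF t, of k l] by (simp add: Sigma_def SigmaInf_Sinf Sigma0_M2)
qed

lemma Dc_Dmat: "\<tau> \<ge> 0 \<Longrightarrow> Dc \<tau> x i j = Dmat (us 0) \<tau> x $ i $ j"
proof -
  assume t: "\<tau> \<ge> 0"
  have T: "T2 \<tau> = twoE (us 0)" using T2_const[OF t] twoE_T2 by simp
  show ?thesis
    unfolding Dc_def Dmat_eq using t
    by (simp add: m0_one m1_cc T Sigma_M2 meanV_cc mult.commute)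
qed

lemma Wst_eq: "\<tau> \<ge> 0 \<Longrightarrow> Wst \<tau> x i = bfield (us 0) x $ i - (\<Sum>j\<in>UNIV. Dmat (us 0) \<tau> x $ i $ j * gs \<tau> x $ j)"
  by (simp add: Wst_def Dc_Dmat bfield_def m0_one m1_cc meanV_cc dd_def algebra_simps)

lemma Wu_Wst: "\<tau> \<ge> 0 \<Longrightarrow> Wu \<tau> x i - Wst \<tau> x i = - (\<Sum>j\<in>UNIV. Dmat (us 0) \<tau> x $ i $ j * (s \<tau> x $ j - gs \<tau> x $ j))"
  by (simp add: Wst_eq Wu_def right_diff_distrib sum_subtractf)

end

context LS
begin

lemma Aij_quad:
  fixes z w :: "real^'d"
  shows "(\<Sum>i\<in>UNIV. \<Sum>j\<in>UNIV. w $ i * Aij z i j * w $ j) = (z \<bullet> z) * (w \<bullet> w) - (w \<bullet> z)\<^sup>2"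
proof -
  define S where "S = (\<Sum>k\<in>UNIV. z $ k * z $ k)"
  have pt: "w $ i * Aij z i j * w $ j = (if i = j then w $ i * w $ j * S else 0) - (w $ i * z $ i) * (w $ j * z $ j)" for i j
    by (cases "i = j") (simp_all add: Aij_def S_def algebra_simps)
  have "(\<Sum>i\<in>UNIV. \<Sum>j\<in>UNIV. w $ i * Aij z i j * w $ j)
      = (\<Sum>i\<in>UNIV. \<Sum>j\<in>UNIV. (if i = j then w $ i * w $ j * S else 0))
        - (\<Sum>i\<in>UNIV. \<Sum>j\<in>UNIV. (w $ i * z $ i) * (w $ j * z $ j))"
    by (simp only: pt sum_subtractf)
  also have "\<dots> = S * (w \<bullet> w) - (w \<bullet> z)\<^sup>2"
    by (simp add: inner_vec_def power2_eq_square sum_product sum_distrib_left algebra_simps)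
  finally show ?thesis by (simp add: S_def inner_vec_def)
qed

lemma Aij_quad_nonneg: "0 \<le> (\<Sum>i\<in>UNIV. \<Sum>j\<in>UNIV. w $ i * Aij z i j * w $ j)"
proof -
  have "0 \<le> (z \<bullet> z) * (w \<bullet> w) - (w \<bullet> z)\<^sup>2"
    using Cauchy_Schwarz_ineq[of w z] by (simp add: mult.commute)
  then show ?thesis by (subst Aij_quad)
qed

lemma Lw_nonneg: "(\<And>y. w y \<ge> 0) \<Longrightarrow> (\<And>y. p y \<ge> 0) \<Longrightarrow> Lw w p \<ge> 0"
  unfolding Lw_def by (rule integral_nonneg_AE) auto

lemma Dmat_psd:
  assumes t: "\<tau> \<ge> 0"
  shows "0 \<le> (\<Sum>i\<in>UNIV. \<Sum>j\<in>UNIV. w $ i * Dmat (us 0) \<tau> x $ i $ j * w $ j)"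
proof -
  note g = gw_us[OF t]
  have "(\<Sum>i\<in>UNIV. \<Sum>j\<in>UNIV. w $ i * Dmat (us 0) \<tau> x $ i $ j * w $ j)
      = (\<Sum>i\<in>UNIV. \<Sum>j\<in>UNIV. w $ i * Lw (us \<tau>) (\<lambda>y. Aij (x - y) i j) * w $ j)"
    using t by (simp add: Lw_Aij Dc_Dmat)
  also have "\<dots> = Lw (us \<tau>) (\<lambda>y. \<Sum>i\<in>UNIV. \<Sum>j\<in>UNIV. w $ i * Aij (x - y) i j * w $ j)"
    using g by (simp add: mult.commute)
  also have "\<dots> \<ge> 0"
    by (rule Lw_nonneg) (use us_pos[OF t] in \<open>auto simp: less_imp_le intro: Aij_quad_nonneg\<close>)
  finally show ?thesis .
qed

lemma Dmat_sym: "Dmat f \<tau> x $ i $ j = Dmat f \<tau> x $ j $ i"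
proof -
  have "Sigma f \<tau> i j = Sigma f \<tau> j i"
    by (cases "i = j") (simp_all add: Sigma_def SigmaInf_def Sigma0_def mult.commute)
  then show ?thesis by (cases "i = j") (simp_all add: Dmat_eq algebra_simps)
qed

lemma key_ineq:
  fixes a c :: "real^'d"
  assumes t: "\<tau> \<ge> 0"
  shows "- (\<Sum>i\<in>UNIV. \<Sum>j\<in>UNIV. c $ i * Dmat (us 0) \<tau> x $ i $ j * (a $ j + c $ j))
     \<le> 1/2 * wnorm2 (Dmat (us 0) \<tau> x) a"
proof -
  define D where "D i j = Dmat (us 0) \<tau> x $ i $ j" for i j
  define Q where "Q v = (\<Sum>i\<in>UNIV. \<Sum>j\<in>UNIV. v $ i * D i j * v $ j)" for v :: "real^'d"
  have Q0: "Q v \<ge> 0" for v unfolding Q_def D_def using Dmat_psd[OF t] .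
  have w: "wnorm2 (Dmat (us 0) \<tau> x) a = Q a"
    by (simp add: wnorm2_def Q_def D_def inner_vec_def matrix_vector_mult_def sum_distrib_left algebra_simps)
  have cross: "(\<Sum>i\<in>UNIV. \<Sum>j\<in>UNIV. c $ i * D i j * a $ j) = (\<Sum>i\<in>UNIV. \<Sum>j\<in>UNIV. a $ i * D i j * c $ j)"
    by (subst sum.swap) (simp add: D_def Dmat_sym mult.commute mult.left_commute)
  have exp: "Q (a + c) = Q a + 2 * (\<Sum>i\<in>UNIV. \<Sum>j\<in>UNIV. c $ i * D i j * a $ j) + Q c"
    using cross by (simp add: Q_def algebra_simps sum.distrib)
  have lhs: "(\<Sum>i\<in>UNIV. \<Sum>j\<in>UNIV. c $ i * D i j * (a $ j + c $ j)) = (\<Sum>i\<in>UNIV. \<Sum>j\<in>UNIV. c $ i * D i j * a $ j) + Q c"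
    by (simp add: Q_def algebra_simps sum.distrib)
  have "- ((\<Sum>i\<in>UNIV. \<Sum>j\<in>UNIV. c $ i * D i j * a $ j) + Q c) \<le> 1/2 * Q a"
    using Q0[of "a + c"] Q0[of c] exp by linarith
  then show ?thesis using lhs w by (simp add: D_def)
qed

end

context LS
begin

lemma KL_eq:
  assumes t: "\<tau> \<ge> 0"
  shows "KLdens (u \<tau>) (us \<tau>) = Lw (u \<tau>) (\<lambda>y. ln (u \<tau> y) - ln (us \<tau> y))"
proof -
  have mu: "u \<tau> \<in> borel_measurable lborel" and ms: "us \<tau> \<in> borel_measurable lborel"
    using gbs_meas(1)[OF gbs_u[OF t], of \<tau>] gbs_meas(1)[OF gbs_us[OF t], of \<tau>] t by auto
  have "KL_divergence (exp 1) (density lborel (us \<tau>)) (density lborel (u \<tau>))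
      = (\<integral>x. u \<tau> x * log (exp 1) (u \<tau> x / us \<tau> x) \<partial>lborel)"
    by (rule lborel.KL_density_density) (use mu ms u_pos[OF t] us_pos[OF t] in \<open>auto simp: less_imp_le intro!: AE_I2 dest: order.strict_implies_not_eq\<close>, metis less_irrefl)
  also have "\<dots> = Lw (u \<tau>) (\<lambda>y. ln (u \<tau> y) - ln (us \<tau> y))"
  proof -
    have nz: "u \<tau> x \<noteq> 0" "us \<tau> x \<noteq> 0" for x using u_pos[OF t, of x] us_pos[OF t, of x] by auto
    show ?thesis unfolding Lw_def using u_pos[OF t] us_pos[OF t] by (simp add: log_def ln_div nz)
  qed
  finally show ?thesis by (simp add: KLdens_def)
qed

lemma gw_u: "\<tau> \<ge> 0 \<Longrightarrow> gw (u \<tau>)"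
  using gbs_gw[OF gbs_u[of \<tau>], of \<tau>] by simp

lemma u_ibp:
  assumes t: "\<tau> \<ge> 0" and p: "pbs {0} (\<lambda>_. p)"
  shows "Lw (u \<tau>) (\<lambda>y. gu \<tau> y $ j * p y) = - Lw (u \<tau>) (\<lambda>y. partial p y j)"
proof -
  have w: "gbs {0} (\<lambda>_. u \<tau>)" using gbs_single[OF gbs_u[OF t], of \<tau> 0] t by simp
  have pg: "pm (\<lambda>y. gu \<tau> y $ j)" using pbs_pm[OF pbs_gu[of \<tau> j], of \<tau>] t by simp
  show ?thesis using weighted_ibp[OF w p, of j "\<lambda>y. gu \<tau> y $ j"] partial_u[OF t] pg by simp
qed

lemma pbs0: "pbs {0..t} f \<Longrightarrow> t \<ge> 0 \<Longrightarrow> pbs {0} (\<lambda>_. f t)"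
  using pbs_single[of "{0..t}" f t 0] by simp

definition "phi t y = ln (u t y) - ln (us t y)"
definition "Eu t y = (\<Sum>i\<in>UNIV. gu t y $ i * Wu t y i + partial (\<lambda>y. Wu t y i) y i)"
definition "Es t y = (\<Sum>i\<in>UNIV. gs t y $ i * Wst t y i + partial (\<lambda>y. Wst t y i) y i)"

lemma pbs_phi: "T \<ge> 0 \<Longrightarrow> pbs {0..T} phi"
  unfolding phi_def[abs_def] by (intro pbs_diff pbs_lnu pbs_lnus)

lemma partial_phi: "t \<ge> 0 \<Longrightarrow> partial (phi t) y i = gu t y $ i - gs t y $ i"
proof -
  assume t: "t \<ge> 0"
  have d: "(\<lambda>y. ln (u t y)) differentiable (at y)" "(\<lambda>y. ln (us t y)) differentiable (at y)"
    using diff t by auto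
  show ?thesis unfolding phi_def[abs_def] by (simp add: partial_diff[OF d] gu_def gs_def grad_partial)
qed

lemma Lw_g:
  assumes t: "t \<ge> 0"
  shows "Lw (u t) (\<lambda>y. - Eu t y * phi t y - Eu t y + Es t y)
       = Lw (u t) (\<lambda>y. \<Sum>i\<in>UNIV. (gu t y $ i - gs t y $ i) * (Wu t y i - Wst t y i))"
proof -
  note g = gw_u[OF t]
  have pgu: "pm (\<lambda>y. gu t y $ i)" for i using pbs_pm[OF pbs_gu[of t i], of t] t by simp
  have pgs: "pm (\<lambda>y. gs t y $ i)" for i using pm_gs[OF t] .
  have pWu: "pm (\<lambda>y. Wu t y i)" for i using pbs_pm[OF pbs_Wu[of t i], of t] t by simp
  have pWs: "pm (\<lambda>y. Wst t y i)" for i using pm_Wst[OF t] .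
  have ppWu: "pm (\<lambda>y. partial (\<lambda>y. Wu t y i) y j)" for i j using pbs_partial_pm[OF pbs_Wu[of t i], of t] t by simp
  have ppWs: "pm (\<lambda>y. partial (\<lambda>y. Wst t y i) y j)" for i j using pbs_partial_pm[OF pbs_Wst[of t i], of t] t by simp
  have pphi: "pm (phi t)" using pbs_pm[OF pbs_phi[of t], of t] t by simp
  have pbWu: "pbs {0} (\<lambda>_ y. Wu t y i)" for i using pbs0[OF pbs_Wu[OF t, of i] t] .
  have pbWs: "pbs {0} (\<lambda>_ y. Wst t y i)" for i using pbs0[OF pbs_Wst[OF t, of i] t] .
  have pbphi: "pbs {0} (\<lambda>_. phi t)" using pbs0[OF pbs_phi[OF t] t] .
  have pbWphi: "pbs {0} (\<lambda>_ y. Wu t y i * phi t y)" for i using pbs_mult[OF pbWu pbphi] by simp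
  have dWu: "(\<lambda>y. Wu t y i) differentiable (at y)" for i y using pbWu unfolding pbs_def by auto
  have dphi: "phi t differentiable (at y)" for y using pbphi unfolding pbs_def by auto
  have a: "Lw (u t) (\<lambda>y. gu t y $ i * (Wu t y i * phi t y)) + Lw (u t) (\<lambda>y. partial (\<lambda>y. Wu t y i) y i * phi t y)
      = - Lw (u t) (\<lambda>y. Wu t y i * (gu t y $ i - gs t y $ i))" for i
  proof -
    have "Lw (u t) (\<lambda>y. gu t y $ i * (Wu t y i * phi t y)) = - Lw (u t) (\<lambda>y. partial (\<lambda>y. Wu t y i * phi t y) y i)"
      by (rule u_ibp[OF t pbWphi])
    also have "(\<lambda>y. partial (\<lambda>y. Wu t y i * phi t y) y i) = (\<lambda>y. partial (\<lambda>y. Wu t y i) y i * phi t y + Wu t y i * (gu t y $ i - gs t y $ i))"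
      by (rule ext) (simp add: partial_mult[OF dWu dphi] partial_phi[OF t])
    finally show ?thesis using g ppWu pphi pWu pgu pgs by simp
  qed
  have b: "Lw (u t) (\<lambda>y. gu t y $ i * Wu t y i) + Lw (u t) (\<lambda>y. partial (\<lambda>y. Wu t y i) y i) = 0" for i
    using u_ibp[OF t pbWu[of i], of i] by simp
  have c: "Lw (u t) (\<lambda>y. partial (\<lambda>y. Wst t y i) y i) = - Lw (u t) (\<lambda>y. gu t y $ i * Wst t y i)" for i
    using u_ibp[OF t pbWs[of i], of i] by simp
  have "Lw (u t) (\<lambda>y. - Eu t y * phi t y - Eu t y + Es t y)
      = (\<Sum>i\<in>UNIV. - (Lw (u t) (\<lambda>y. gu t y $ i * (Wu t y i * phi t y)) + Lw (u t) (\<lambda>y. partial (\<lambda>y. Wu t y i) y i * phi t y))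
          - (Lw (u t) (\<lambda>y. gu t y $ i * Wu t y i) + Lw (u t) (\<lambda>y. partial (\<lambda>y. Wu t y i) y i))
          + (Lw (u t) (\<lambda>y. gs t y $ i * Wst t y i) + Lw (u t) (\<lambda>y. partial (\<lambda>y. Wst t y i) y i)))"
  proof -
    have "(\<lambda>y. - Eu t y * phi t y - Eu t y + Es t y) = (\<lambda>y. \<Sum>i\<in>UNIV.
       - (gu t y $ i * (Wu t y i * phi t y) + partial (\<lambda>y. Wu t y i) y i * phi t y)
       - (gu t y $ i * Wu t y i + partial (\<lambda>y. Wu t y i) y i)
       + (gs t y $ i * Wst t y i + partial (\<lambda>y. Wst t y i) y i))"
      by (rule ext) (simp add: Eu_def Es_def sum.distrib sum_subtractf sum_distrib_right sum_distrib_left sum_negf algebra_simps)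
    then show ?thesis using g pgu pgs pWu pWs ppWu ppWs pphi by simp
  qed
  also have "\<dots> = (\<Sum>i\<in>UNIV. Lw (u t) (\<lambda>y. Wu t y i * (gu t y $ i - gs t y $ i))
          + Lw (u t) (\<lambda>y. gs t y $ i * Wst t y i) - Lw (u t) (\<lambda>y. gu t y $ i * Wst t y i))"
    by (rule sum.cong) (simp_all add: a b c)
  also have "\<dots> = Lw (u t) (\<lambda>y. \<Sum>i\<in>UNIV. (gu t y $ i - gs t y $ i) * (Wu t y i - Wst t y i))"
  proof -
    have "(\<lambda>y. \<Sum>i\<in>UNIV. (gu t y $ i - gs t y $ i) * (Wu t y i - Wst t y i)) = (\<lambda>y. \<Sum>i\<in>UNIV.
       Wu t y i * (gu t y $ i - gs t y $ i) + gs t y $ i * Wst t y i - gu t y $ i * Wst t y i)"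
      by (rule ext) (rule sum.cong, simp_all add: algebra_simps)
    then show ?thesis using g pgu pgs pWu pWs by simp
  qed
  finally show ?thesis .
qed

end

context LS
begin

lemma Du_eq: "\<tau> \<ge> 0 \<Longrightarrow> (\<Sum>i\<in>UNIV. partial (\<lambda>y. u \<tau> y * Wu \<tau> y i) x i) = u \<tau> x * Eu \<tau> x"
proof -
  assume t: "\<tau> \<ge> 0"
  have d: "(\<lambda>y. Wu \<tau> y i) differentiable (at x)" for i using pbs_Wu[OF t, of i] t unfolding pbs_def by auto
  show ?thesis
    by (simp add: partial_mult[OF diff_u[OF t] d] partial_u[OF t] Eu_def sum_distrib_left algebra_simps)
qed

lemma Ds_eq: "\<tau> \<ge> 0 \<Longrightarrow> (\<Sum>i\<in>UNIV. partial (\<lambda>y. us \<tau> y * Wst \<tau> y i) x i) = us \<tau> x * Es \<tau> x"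
proof -
  assume t: "\<tau> \<ge> 0"
  have d: "(\<lambda>y. Wst \<tau> y i) differentiable (at x)" for i using pbs_Wst[OF t, of i] t unfolding pbs_def by auto
  show ?thesis
    by (simp add: partial_mult[OF diff_us[OF t] d] partial_us[OF t] Es_def sum_distrib_left algebra_simps)
qed

lemma pbu_Eu: "T \<ge> 0 \<Longrightarrow> pbu {0..T} Eu"
proof -
  assume T: "T \<ge> 0"
  have "pbu {0..T} (\<lambda>\<tau> y. \<Sum>i\<in>UNIV. gu \<tau> y $ i * Wu \<tau> y i + partial (\<lambda>y. Wu \<tau> y i) y i)"
    using pbs_gu[OF T] pbs_Wu[OF T] unfolding pbs_def by (intro pbu_sum pbu_add pbu_mult) auto
  then show ?thesis unfolding Eu_def[abs_def] .
qed

lemma pbu_Es: "T \<ge> 0 \<Longrightarrow> pbu {0..T} Es"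
proof -
  assume T: "T \<ge> 0"
  have "pbu {0..T} (\<lambda>\<tau> y. \<Sum>i\<in>UNIV. gs \<tau> y $ i * Wst \<tau> y i + partial (\<lambda>y. Wst \<tau> y i) y i)"
    using pbs_gs[OF T] pbs_Wst[OF T] unfolding pbs_def by (intro pbu_sum pbu_add pbu_mult) auto
  then show ?thesis unfolding Es_def[abs_def] .
qed

lemma pm_Eu: "t \<ge> 0 \<Longrightarrow> pm (Eu t)"
proof -
  assume t: "t \<ge> 0"
  have "pm (\<lambda>y. \<Sum>i\<in>UNIV. gu t y $ i * Wu t y i + partial (\<lambda>y. Wu t y i) y i)"
    using pbs_pm[OF pbs_gu[OF t], of t] pbs_pm[OF pbs_Wu[OF t], of t] pbs_partial_pm[OF pbs_Wu[OF t], of t] t by simp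
  then show ?thesis unfolding Eu_def[abs_def] .
qed

lemma pm_Es: "t \<ge> 0 \<Longrightarrow> pm (Es t)"
proof -
  assume t: "t \<ge> 0"
  have "pm (\<lambda>y. \<Sum>i\<in>UNIV. gs t y $ i * Wst t y i + partial (\<lambda>y. Wst t y i) y i)"
    using pm_gs[OF t] pm_Wst[OF t] pbs_partial_pm[OF pbs_Wst[OF t], of t] t by simp
  then show ?thesis unfolding Es_def[abs_def] .
qed

lemma pm_phi: "t \<ge> 0 \<Longrightarrow> pm (phi t)"
  using pbs_pm[OF pbs_phi, of t t] by simp

lemma KL_deriv:
  assumes t: "t \<ge> 0"
  shows "((\<lambda>\<sigma>. KLdens (u \<sigma>) (us \<sigma>)) has_real_derivative Lw (u t) (\<lambda>y. - Eu t y * phi t y - Eu t y + Es t y)) (at t within {0..})"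
proof -
  define I where "I = {0..t+1}"
  have tI: "t \<in> I" using t by (simp add: I_def)
  have I0: "\<tau> \<in> I \<Longrightarrow> \<tau> \<ge> 0" for \<tau> by (simp add: I_def)
  define f where "f \<sigma> x = u \<sigma> x * phi \<sigma> x" for \<sigma> x
  define g where "g \<sigma> x = u \<sigma> x * (- Eu \<sigma> x * phi \<sigma> x - Eu \<sigma> x + Es \<sigma> x)" for \<sigma> x
  have dI: "((\<lambda>\<sigma>. f \<sigma> x) has_real_derivative g \<tau> x) (at \<tau> within I)" if "\<tau> \<in> I" for \<tau> x
  proof -
    have t0: "\<tau> \<ge> 0" using I0[OF that] .
    have du: "((\<lambda>\<sigma>. u \<sigma> x) has_real_derivative - (u \<tau> x * Eu \<tau> x)) (at \<tau> within {0..})"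
      using u_deriv[OF t0, of x] Du_eq[OF t0, of x] by simp
    have ds: "((\<lambda>\<sigma>. us \<sigma> x) has_real_derivative - (us \<tau> x * Es \<tau> x)) (at \<tau> within {0..})"
      using us_deriv[OF t0, of x] Ds_eq[OF t0, of x] by simp
    have lu: "((\<lambda>\<sigma>. ln (u \<sigma> x)) has_real_derivative 1 / u \<tau> x * - (u \<tau> x * Eu \<tau> x)) (at \<tau> within {0..})"
      by (rule DERIV_chain2[OF DERIV_ln_divide[OF u_pos[OF t0]] du])
    have ls: "((\<lambda>\<sigma>. ln (us \<sigma> x)) has_real_derivative 1 / us \<tau> x * - (us \<tau> x * Es \<tau> x)) (at \<tau> within {0..})"
      by (rule DERIV_chain2[OF DERIV_ln_divide[OF us_pos[OF t0]] ds])
    have "((\<lambda>\<sigma>. u \<sigma> x * (ln (u \<sigma> x) - ln (us \<sigma> x))) has_real_derivative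
         - (u \<tau> x * Eu \<tau> x) * (ln (u \<tau> x) - ln (us \<tau> x)) + (1 / u \<tau> x * - (u \<tau> x * Eu \<tau> x) - 1 / us \<tau> x * - (us \<tau> x * Es \<tau> x)) * u \<tau> x)
         (at \<tau> within {0..})"
      by (rule DERIV_mult[OF du DERIV_diff[OF lu ls]])
    moreover have "- (u \<tau> x * Eu \<tau> x) * (ln (u \<tau> x) - ln (us \<tau> x)) + (1 / u \<tau> x * - (u \<tau> x * Eu \<tau> x) - 1 / us \<tau> x * - (us \<tau> x * Es \<tau> x)) * u \<tau> x
        = g \<tau> x"
      using u_pos[OF t0, of x] us_pos[OF t0, of x] by (simp add: g_def phi_def field_simps)
    ultimately have "((\<lambda>\<sigma>. f \<sigma> x) has_real_derivative g \<tau> x) (at \<tau> within {0..})"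
      by (simp add: f_def[abs_def] phi_def)
    then show ?thesis by (rule DERIV_subset) (auto simp: I_def)
  qed
  have fi: "integrable lborel (f \<tau>)" if "\<tau> \<in> I" for \<tau>
    using gw_int[OF gw_u[OF I0[OF that]] pm_phi[OF I0[OF that]]] by (simp add: f_def[abs_def])
  have gm: "g t \<in> borel_measurable lborel"
  proof -
    have "pm (\<lambda>y. - Eu t y * phi t y - Eu t y + Es t y)" using pm_Eu[OF t] pm_Es[OF t] pm_phi[OF t] by simp
    then show ?thesis using gbs_meas(1)[OF gbs_u[OF t], of t] t unfolding g_def[abs_def] pm_def
      by (simp, intro borel_measurable_times) auto
  qed
  have "gbu I g"
  proof -
    have "gbu I u" using gbs_u[of "t+1"] t unfolding gbs_def I_def by simp
    moreover have "pbu I (\<lambda>\<sigma> y. - Eu \<sigma> y * phi \<sigma> y - Eu \<sigma> y + Es \<sigma> y)"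
      using pbu_Eu[of "t+1"] pbu_Es[of "t+1"] pbs_phi[of "t+1"] t unfolding I_def pbs_def
      by (intro pbu_add pbu_diff pbu_mult pbu_uminus) auto
    ultimately show ?thesis unfolding g_def[abs_def] by (rule gbu_mult_pbu)
  qed
  then obtain G :: "real^'d \<Rightarrow> real" where G: "integrable lborel G" "\<And>\<tau> x. \<tau> \<in> I \<Longrightarrow> \<bar>g \<tau> x\<bar> \<le> G x"
    by (rule gbu_dominated) blast
  have D: "((\<lambda>\<sigma>. integral\<^sup>L lborel (f \<sigma>)) has_real_derivative integral\<^sup>L lborel (g t)) (at t within I)"
    by (rule DUI[OF _ tI dI fi gm G]) (simp add: I_def)
  then have D': "((\<lambda>\<sigma>. integral\<^sup>L lborel (f \<sigma>)) has_real_derivative integral\<^sup>L lborel (g t)) (at t within {0..})"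
    using at_within_Icc_ge[OF t] by (simp add: I_def)
  have "((\<lambda>\<sigma>. KLdens (u \<sigma>) (us \<sigma>)) has_real_derivative integral\<^sup>L lborel (g t)) (at t within {0..})"
    by (rule has_field_derivative_transform_within[OF D', of 1])
       (use t in \<open>auto simp: KL_eq Lw_def f_def[abs_def] phi_def\<close>)
  then show ?thesis by (simp add: g_def[abs_def] Lw_def)
qed

end

lemma pm_divide[simp]: "pm p \<Longrightarrow> pm (\<lambda>y. p y / c)"
  using pm_mult[of p "\<lambda>_. inverse c"] by (simp add: divide_inverse)

context LS
begin

lemma wnorm2_sum: "wnorm2 M w = (\<Sum>i\<in>UNIV. \<Sum>j\<in>UNIV. w $ i * M $ i $ j * w $ j)"
  by (simp add: wnorm2_def inner_vec_def matrix_vector_mult_def sum_distrib_left algebra_simps)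

lemma final_bound:
  assumes t: "t \<ge> 0"
  shows "Lw (u t) (\<lambda>y. - Eu t y * phi t y - Eu t y + Es t y)
     \<le> 1/2 * integral\<^sup>L lborel (\<lambda>x. wnorm2 (Dmat (us 0) t x) (s t x - grad (\<lambda>y. ln (u t y)) x) * u t x)"
proof -
  note g = gw_u[OF t]
  define a where "a x = s t x - gu t x" for x
  define c where "c x = gu t x - gs t x" for x
  have pt: "(\<Sum>i\<in>UNIV. (gu t y $ i - gs t y $ i) * (Wu t y i - Wst t y i))
      = - (\<Sum>i\<in>UNIV. \<Sum>j\<in>UNIV. c y $ i * Dmat (us 0) t y $ i $ j * (a y $ j + c y $ j))" for y
    by (simp add: Wu_Wst[OF t] a_def c_def sum_distrib_left sum_negf algebra_simps)
  have pa: "pm (\<lambda>y. a y $ i)" for i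
    unfolding a_def using pbs_pm[OF pbs_s[OF t], of t] pbs_pm[OF pbs_gu[OF t], of t] t by simp
  have pc: "pm (\<lambda>y. c y $ i)" for i
    unfolding c_def using pm_gs[OF t] pbs_pm[OF pbs_gu[OF t], of t] t by simp
  have pD: "pm (\<lambda>y. Dmat (us 0) t y $ i $ j)" for i j
    using pbs_pm[OF pbs_Dmat[OF t], of t] t by simp
  have "Lw (u t) (\<lambda>y. - Eu t y * phi t y - Eu t y + Es t y)
      = Lw (u t) (\<lambda>y. - (\<Sum>i\<in>UNIV. \<Sum>j\<in>UNIV. c y $ i * Dmat (us 0) t y $ i $ j * (a y $ j + c y $ j)))"
    by (subst Lw_g[OF t]) (simp only: pt)
  also have "\<dots> \<le> Lw (u t) (\<lambda>y. 1/2 * wnorm2 (Dmat (us 0) t y) (a y))"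
    unfolding Lw_def
  proof (rule integral_mono)
    show "integrable lborel (\<lambda>y. u t y * - (\<Sum>i\<in>UNIV. \<Sum>j\<in>UNIV. c y $ i * Dmat (us 0) t y $ i $ j * (a y $ j + c y $ j)))"
      using pa pc pD by (intro gw_int[OF g]) simp
    show "integrable lborel (\<lambda>y. u t y * (1/2 * wnorm2 (Dmat (us 0) t y) (a y)))"
      using pa pc pD by (intro gw_int[OF g]) (simp add: wnorm2_sum)
    show "u t y * - (\<Sum>i\<in>UNIV. \<Sum>j\<in>UNIV. c y $ i * Dmat (us 0) t y $ i $ j * (a y $ j + c y $ j))
        \<le> u t y * (1/2 * wnorm2 (Dmat (us 0) t y) (a y))" for y
      using key_ineq[OF t, of "c y" y "a y"] u_pos[OF t, of y] by (intro mult_left_mono) auto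
  qed
  also have "\<dots> = 1/2 * integral\<^sup>L lborel (\<lambda>x. wnorm2 (Dmat (us 0) t x) (s t x - grad (\<lambda>y. ln (u t y)) x) * u t x)"
    by (simp add: Lw_def a_def gu_def mult.commute)
  finally show ?thesis .
qed

end

theorem corollary4p2:
  fixes u us :: "real \<Rightarrow> real^'d \<Rightarrow> real"
    and s :: "real \<Rightarrow> real^'d \<Rightarrow> real^'d"
    and t :: real
  assumes t_nonneg: "t \<ge> 0"
    and pos: "\<forall>\<tau>\<ge>0. \<forall>x. u \<tau> x > 0 \<and> us \<tau> x > 0"
    and mass: "integral\<^sup>L lborel (u 0) = 1" "integral\<^sup>L lborel (us 0) = 1"
    and diff: "\<forall>\<tau>\<ge>0. \<forall>x.
        (\<lambda>y. ln (u \<tau> y)) differentiable (at x) \<and>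
        grad (\<lambda>y. ln (u \<tau> y)) differentiable (at x) \<and>
        (\<lambda>y. ln (us \<tau> y)) differentiable (at x) \<and>
        grad (\<lambda>y. ln (us \<tau> y)) differentiable (at x) \<and>
        s \<tau> differentiable (at x) \<and>
        (\<lambda>y. us \<tau> y *\<^sub>R landau_vel us \<tau> y) differentiable (at x)"
    and reg_u: "gauss_bounded u" "poly_bounded (\<lambda>\<tau> x. ln (u \<tau> x))"
      "\<forall>i. poly_bounded (\<lambda>\<tau> x. grad (\<lambda>y. ln (u \<tau> y)) x $ i)"
      "\<forall>i j. poly_bounded (\<lambda>\<tau> x. jacobian (grad (\<lambda>y. ln (u \<tau> y))) (at x) $ i $ j)"
    and reg_us: "gauss_bounded us" "poly_bounded (\<lambda>\<tau> x. ln (us \<tau> x))"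
      "\<forall>i. poly_bounded (\<lambda>\<tau> x. grad (\<lambda>y. ln (us \<tau> y)) x $ i)"
      "\<forall>i j. poly_bounded (\<lambda>\<tau> x. jacobian (grad (\<lambda>y. ln (us \<tau> y))) (at x) $ i $ j)"
    and reg_s: "\<forall>i. poly_bounded (\<lambda>\<tau> x. s \<tau> x $ i)"
      "\<forall>i j. poly_bounded (\<lambda>\<tau> x. jacobian (s \<tau>) (at x) $ i $ j)"
    and landau: "\<forall>\<tau>\<ge>0. \<forall>x. ((\<lambda>\<sigma>. us \<sigma> x) has_real_derivative
        - divg (\<lambda>y. us \<tau> y *\<^sub>R landau_vel us \<tau> y) x) (at \<tau> within {0..})"
    and continuity: "\<forall>\<tau>\<ge>0. \<forall>x. ((\<lambda>\<sigma>. u \<sigma> x) has_real_derivative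
        - divg (\<lambda>y. u \<tau> y *\<^sub>R (bfield (us 0) y - Dmat (us 0) \<tau> y *v s \<tau> y)) x)
        (at \<tau> within {0..})"
    and mom1: "\<forall>i. integral\<^sup>L lborel (\<lambda>x. x $ i * u 0 x) = integral\<^sup>L lborel (\<lambda>x. x $ i * us 0 x)"
    and mom2: "\<forall>i j. integral\<^sup>L lborel (\<lambda>x. x $ i * x $ j * u 0 x)
                   = integral\<^sup>L lborel (\<lambda>x. x $ i * x $ j * us 0 x)"
  shows "\<exists>D'. ((\<lambda>\<sigma>. KLdens (u \<sigma>) (us \<sigma>)) has_real_derivative D') (at t within {0..}) \<and>
    D' \<le> 1/2 * integral\<^sup>L lborel
            (\<lambda>x. wnorm2 (Dmat (us 0) t x) (s t x - grad (\<lambda>y. ln (u t y)) x) * u t x)"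
proof -
  interpret LS u us s
    by (rule LS.intro) (fact pos mass diff reg_u reg_us reg_s landau continuity)+
  show ?thesis using KL_deriv[OF t_nonneg] final_bound[OF t_nonneg] by blast
qed

end
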